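(* Let $\mathcal{T}$ be a meager hereditary family, let $l$ be a positive integer and let $\varepsilon>0$. For every $\eta>0$ there exists $n_0$ such that the following holds for all $n\ge n_0$. Let $(G_1,\dots,G_l)$ be vertex-disjoint graphs with $G_i\in\mathcal{T}$ for every $i\in[l]$ such that $\mathcal{X}=(V(G_1),\dots,V(G_l))$ is an $\varepsilon$-balanced partition of $[n]$. Then for at least a $(1-\eta)$-fraction of all extensions $G$ of $(G_1,\dots,G_l)$, the partition $\mathcal{X}$ is the unique $(\mathcal{T},l)$-partition of $G$. (That is: $\mathcal{X}$ is the unique $(\mathcal{T},l)$-partition of $G$ for almost every extension $G$ of $(G_1,\dots,G_l)$.)
   Context: All graphs are finite and simple. A family is hereditary if closed under isomorphism and induced subgraphs. For $s,t\ge0$, $\mathcal{H}(s,t)$ is the family of graphs whose vertex set can be partitioned into $s$ independent sets and $t$ cliques (parts may be empty); $\chi_c(\mathcal{F})$ is the maximum $l$ with $\mathcal{H}(s,l-s)\subseteq\mathcal{F}$ for some $0\le s\le l$. A hereditary family is thin if $\chi_c\le1$, meager if thin and it does not contain some substar and does not contain some antisubstar (substar: subgraph of a star; antisubstar: complement of a substar). A $(\mathcal{T},l)$-partition of $G$ is a partition $(X_1,\dots,X_l)$ of $V(G)$ with $G[X_i]\in\mathcal{T}$ for all $i$. A partition $\mathcal{X}$ of an $n$-element set is $\varepsilon$-balanced if $\big||X|-n/|\mathcal{X}|\big|\le n^{1-\varepsilon}$ for all $X\in\mathcal{X}$. For vertex-disjoint graphs $(G_1,\dots,G_l)$, an extension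 is a graph $G$ with $V(G)=\bigcup_i V(G_i)$ such that each $G_i$ is an induced subgraph of $G$. *)

theory Defs
  imports Complex_Main
begin

text \<open>Since families are closed under isomorphism,
  fixing the vertex type nat loses no generality for finite graphs.\<close>

type_synonym graph = "nat set \<times> nat set set"

definition verts :: "graph \<Rightarrow> nat set" where "verts G = fst G"
definition edges :: "graph \<Rightarrow> nat set set" where "edges G = snd G"

definition wf_graph :: "graph \<Rightarrow> bool" where
  "wf_graph G \<longleftrightarrow> finite (verts G) \<and>
     (\<forall>e\<in>edges G. \<exists>x y. x \<noteq> y \<and> e = {x, y} \<and> x \<in> verts G \<and> y \<in> verts G)"

definition induced :: "graph \<Rightarrow> nat set \<Rightarrow> graph" where
  "induced G U = (U, {e\<in>edges G. e \<subseteq> U})"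

definition graph_iso :: "graph \<Rightarrow> graph \<Rightarrow> bool" where
  "graph_iso G H \<longleftrightarrow> (\<exists>f. bij_betw f (verts G) (verts H) \<and>
     (\<forall>x\<in>verts G. \<forall>y\<in>verts G. {x, y} \<in> edges G \<longleftrightarrow> {f x, f y} \<in> edges H))"

definition complement :: "graph \<Rightarrow> graph" where
  "complement G = (verts G, {{x, y} | x y. x \<in> verts G \<and> y \<in> verts G \<and> x \<noteq> y \<and> {x, y} \<notin> edges G})"

definition hereditary :: "graph set \<Rightarrow> bool" where
  "hereditary F \<longleftrightarrow> (\<forall>G\<in>F. wf_graph G) \<and>
     (\<forall>G H. G \<in> F \<longrightarrow> wf_graph H \<longrightarrow> graph_iso G H \<longrightarrow> H \<in> F) \<and>
     (\<forall>G U. G \<in> F \<longrightarrow> U \<subseteq> verts G \<longrightarrow> induced G U \<in> F)"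

definition independent_set :: "graph \<Rightarrow> nat set \<Rightarrow> bool" where
  "independent_set G A \<longleftrightarrow> (\<forall>x\<in>A. \<forall>y\<in>A. {x, y} \<notin> edges G)"

definition clique :: "graph \<Rightarrow> nat set \<Rightarrow> bool" where
  "clique G A \<longleftrightarrow> (\<forall>x\<in>A. \<forall>y\<in>A. x \<noteq> y \<longrightarrow> {x, y} \<in> edges G)"

text \<open>\<open>\<H>(s,t)\<close>: parts indexed by 0..<s are independent sets, parts s..<s+t are cliques;
  parts may be empty.\<close>
definition Hst :: "nat \<Rightarrow> nat \<Rightarrow> graph set" where
  "Hst s t = {G. wf_graph G \<and> (\<exists>A :: nat \<Rightarrow> nat set.
      (\<Union>i<s+t. A i) = verts G \<and>
      (\<forall>i<s+t. \<forall>j<s+t. i \<noteq> j \<longrightarrow> A i \<inter> A j = {}) \<and>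
      (\<forall>i<s. independent_set G (A i)) \<and>
      (\<forall>i. s \<le> i \<and> i < s+t \<longrightarrow> clique G (A i)))}"

text \<open>\<open>\<chi>\<^sub>c(F) \<le> k\<close>: every l with \<open>\<H>(s,l-s) \<subseteq> F\<close> for some \<open>0 \<le> s \<le> l\<close> satisfies l \<le> k.\<close>
definition chi_c_le :: "graph set \<Rightarrow> nat \<Rightarrow> bool" where
  "chi_c_le F k \<longleftrightarrow> (\<forall>l s. s \<le> l \<and> Hst s (l - s) \<subseteq> F \<longrightarrow> l \<le> k)"

definition thin :: "graph set \<Rightarrow> bool" where
  "thin F \<longleftrightarrow> hereditary F \<and> chi_c_le F 1"

definition substar :: "graph \<Rightarrow> bool" where
  "substar G \<longleftrightarrow> wf_graph G \<and> (\<exists>v. \<forall>e\<in>edges G. v \<in> e)"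

definition antisubstar :: "graph \<Rightarrow> bool" where
  "antisubstar G \<longleftrightarrow> wf_graph G \<and> substar (complement G)"

definition meager :: "graph set \<Rightarrow> bool" where
  "meager F \<longleftrightarrow> thin F \<and> (\<exists>G. substar G \<and> G \<notin> F) \<and> (\<exists>G. antisubstar G \<and> G \<notin> F)"

definition Tl_partition :: "graph set \<Rightarrow> nat \<Rightarrow> graph \<Rightarrow> (nat \<Rightarrow> nat set) \<Rightarrow> bool" where
  "Tl_partition T l G Y \<longleftrightarrow> (\<Union>i<l. Y i) = verts G \<and>
     (\<forall>i<l. \<forall>j<l. i \<noteq> j \<longrightarrow> Y i \<inter> Y j = {}) \<and>
     (\<forall>i<l. induced G (Y i) \<in> T)"

text \<open>X is the unique (T,l)-partition of G, partitions being compared as sets of parts.\<close>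
definition unique_Tl_partition :: "graph set \<Rightarrow> nat \<Rightarrow> graph \<Rightarrow> (nat \<Rightarrow> nat set) \<Rightarrow> bool" where
  "unique_Tl_partition T l G X \<longleftrightarrow> Tl_partition T l G X \<and>
     (\<forall>Y. Tl_partition T l G Y \<longrightarrow> Y ` {..<l} = X ` {..<l})"

definition eps_balanced :: "real \<Rightarrow> nat \<Rightarrow> nat \<Rightarrow> (nat \<Rightarrow> nat set) \<Rightarrow> bool" where
  "eps_balanced \<epsilon> n l X \<longleftrightarrow>
     (\<forall>i<l. \<bar>real (card (X i)) - real n / real l\<bar> \<le> real n powr (1 - \<epsilon>))"

definition extensions :: "nat \<Rightarrow> (nat \<Rightarrow> graph) \<Rightarrow> graph set" where
  "extensions l Gs = {G. wf_graph G \<and> verts G = (\<Union>i<l. verts (Gs i)) \<and>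
      (\<forall>i<l. induced G (verts (Gs i)) = Gs i)}"

end

theory Submission
  imports Defs "HOL-Library.Ramsey" "HOL-Real_Asymp.Real_Asymp"
begin


definition homog :: "graph \<Rightarrow> bool \<Rightarrow> nat set \<Rightarrow> bool" where
  "homog G \<tau> A \<longleftrightarrow> (\<forall>x\<in>A. \<forall>y\<in>A. x \<noteq> y \<longrightarrow> ({x,y} \<in> edges G \<longleftrightarrow> \<tau>))"

definition twopart :: "graph set \<Rightarrow> graph \<Rightarrow> nat set \<Rightarrow> nat set \<Rightarrow> bool \<Rightarrow> bool \<Rightarrow> bool" where
  "twopart T F U1 U2 \<tau>1 \<tau>2 \<longleftrightarrow> wf_graph F \<and> F \<notin> T \<and> verts F = U1 \<union> U2 \<and> U1 \<inter> U2 = {}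
     \<and> homog F \<tau>1 U1 \<and> homog F \<tau>2 U2"

lemma verts_induced[simp]: "verts (induced G U) = U"
  by (simp add: induced_def verts_def)
lemma edges_induced[simp]: "edges (induced G U) = {e\<in>edges G. e \<subseteq> U}"
  by (simp add: induced_def edges_def)

lemma graph_eqI: "verts G = verts H \<Longrightarrow> edges G = edges H \<Longrightarrow> G = H"
  by (metis edges_def prod_eq_iff verts_def)

lemma induced_induced: "U \<subseteq> W \<Longrightarrow> induced (induced G W) U = induced G U"
  by (rule graph_eqI) auto

lemma wf_loop: "wf_graph G \<Longrightarrow> {x, x} \<notin> edges G"
  unfolding wf_graph_def by (metis doubleton_eq_iff insert_absorb2)

lemma wf_edge_verts: "wf_graph G \<Longrightarrow> {x, y} \<in> edges G \<Longrightarrow> x \<in> verts G \<and> y \<in> verts G"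
  unfolding wf_graph_def by (metis doubleton_eq_iff)

lemma hereditary_induced: "hereditary T \<Longrightarrow> G \<in> T \<Longrightarrow> U \<subseteq> verts G \<Longrightarrow> induced G U \<in> T"
  unfolding hereditary_def by blast

lemma hereditary_wf: "hereditary T \<Longrightarrow> G \<in> T \<Longrightarrow> wf_graph G"
  unfolding hereditary_def by blast

lemma forbidden_copy:
  assumes hT: "hereditary T" and wfH: "wf_graph H" and HT: "H \<notin> T"
    and inj: "inj_on f (verts H)" and sub: "f ` verts H \<subseteq> Y"
    and adj: "\<forall>x\<in>verts H. \<forall>y\<in>verts H. ({x,y} \<in> edges H \<longleftrightarrow> {f x, f y} \<in> edges G)"
  shows "induced G Y \<notin> T"
proof
  assume "induced G Y \<in> T"
  then have I: "induced (induced G Y) (f ` verts H) \<in> T"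
    using hereditary_induced[OF hT \<open>induced G Y \<in> T\<close>] sub by simp
  let ?I = "induced (induced G Y) (f ` verts H)"
  define g where "g = the_inv_into (verts H) f"
  have bij: "bij_betw g (f ` verts H) (verts H)"
    unfolding g_def using inj by (simp add: bij_betw_the_inv_into inj_on_imp_bij_betw)
  have gf: "\<And>x. x \<in> verts H \<Longrightarrow> g (f x) = x" unfolding g_def using inj
    by (simp add: the_inv_into_f_f)
  have "graph_iso ?I H"
    unfolding graph_iso_def
  proof (intro exI[of _ g] conjI ballI)
    show "bij_betw g (verts ?I) (verts H)" using bij by simp
  next
    fix x y assume "x \<in> verts ?I" "y \<in> verts ?I"
    then obtain x' y' where xy: "x' \<in> verts H" "y' \<in> verts H" "x = f x'" "y = f y'" by auto
    show "{x, y} \<in> edges ?I \<longleftrightarrow> {g x, g y} \<in> edges H"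
      using xy adj sub gf by auto
  qed
  then have "H \<in> T" using hT I wfH unfolding hereditary_def by blast
  with HT show False by simp
qed

lemma empty_graph_in:
  assumes "hereditary T" "G \<in> T" shows "({}, {}) \<in> T"
proof -
  have "wf_graph G" using assms hereditary_wf by blast
  then have "induced G {} = ({}, {})"
    unfolding induced_def wf_graph_def by auto
  then show ?thesis using hereditary_induced[OF assms, of "{}"] by simp
qed

lemma Hst_two_not_sub:
  assumes "thin T" "s \<le> 2" shows "\<not> Hst s (2 - s) \<subseteq> T"
  using assms unfolding thin_def chi_c_le_def by (metis numeral_le_one_iff semiring_norm(69))

lemma lessThan2: "{..<2::nat} = {0,1}" by auto

lemma indep_homog: "independent_set G A \<Longrightarrow> homog G False A"
  unfolding independent_set_def homog_def by auto
lemma clique_homog: "Defs.clique G A \<Longrightarrow> homog G True A"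
  unfolding Defs.clique_def homog_def by auto

lemma forb2:
  assumes "thin T" shows "\<exists>F U1 U2. twopart T F U1 U2 \<tau>1 \<tau>2"
proof -
  define s where "s = (if \<tau>1 \<and> \<tau>2 then 0 else if \<not>\<tau>1 \<and> \<not>\<tau>2 then 2 else (1::nat))"
  have "s \<le> 2" unfolding s_def by auto
  from Hst_two_not_sub[OF assms this] obtain F where F: "F \<in> Hst s (2 - s)" "F \<notin> T" by blast
  then obtain A where wf: "wf_graph F" and A: "(\<Union>i<2. A i) = verts F"
      "\<forall>i<2. \<forall>j<2. i \<noteq> j \<longrightarrow> A i \<inter> A j = {}"
      "\<forall>i<s. independent_set F (A i)" "\<forall>i. s \<le> i \<and> i < 2 \<longrightarrow> Defs.clique F (A i)"
    unfolding Hst_def using \<open>s \<le> 2\<close> by auto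
  have U: "verts F = A 0 \<union> A 1" using A(1) by (auto simp: lessThan2)
  have D: "A 0 \<inter> A 1 = {}" using A(2) by auto
  have tp: "twopart T F (A 0) (A 1) \<tau>a \<tau>b" "twopart T F (A 1) (A 0) \<tau>b \<tau>a"
    if "homog F \<tau>a (A 0)" "homog F \<tau>b (A 1)" for \<tau>a \<tau>b
    using that wf F(2) U D unfolding twopart_def by (auto simp: Int_commute Un_commute)
  have h0: "s = 2 \<Longrightarrow> homog F False (A 0)" "s \<ge> 1 \<Longrightarrow> homog F False (A 0)"
    "s = 0 \<Longrightarrow> homog F True (A 0)"
    "s = 2 \<Longrightarrow> homog F False (A 1)" "s \<le> 1 \<Longrightarrow> homog F True (A 1)"
    using A(3,4) by (auto intro!: indep_homog clique_homog)
  show ?thesis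
  proof (cases \<tau>1; cases \<tau>2)
    assume "\<tau>1" "\<tau>2" then have "s = 0" unfolding s_def by simp
    then have "homog F True (A 0)" "homog F True (A 1)" using h0 by auto
    then have "twopart T F (A 0) (A 1) True True" using tp(1) by blast
    then show ?thesis using \<open>\<tau>1\<close> \<open>\<tau>2\<close> by (intro exI[of _ F] exI[of _ "A 0"] exI[of _ "A 1"]) simp
  next
    assume "\<tau>1" "\<not>\<tau>2" then have "s = 1" unfolding s_def by simp
    then have "homog F False (A 0)" "homog F True (A 1)" using h0 by auto
    then have "twopart T F (A 1) (A 0) True False" using tp(2) by blast
    then show ?thesis using \<open>\<tau>1\<close> \<open>\<not>\<tau>2\<close> by (intro exI[of _ F] exI[of _ "A 1"] exI[of _ "A 0"]) simp
  next
    assume "\<not>\<tau>1" "\<tau>2" then have "s = 1" unfolding s_def by simp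
    then have "homog F False (A 0)" "homog F True (A 1)" using h0 by auto
    then have "twopart T F (A 0) (A 1) False True" using tp(1) by blast
    then show ?thesis using \<open>\<not>\<tau>1\<close> \<open>\<tau>2\<close> by (intro exI[of _ F] exI[of _ "A 0"] exI[of _ "A 1"]) simp
  next
    assume "\<not>\<tau>1" "\<not>\<tau>2" then have "s = 2" unfolding s_def by simp
    then have "homog F False (A 0)" "homog F False (A 1)" using h0 by auto
    then have "twopart T F (A 0) (A 1) False False" using tp(1) by blast
    then show ?thesis using \<open>\<not>\<tau>1\<close> \<open>\<not>\<tau>2\<close> by (intro exI[of _ F] exI[of _ "A 0"] exI[of _ "A 1"]) simp
  qed
qed

lemma homog_single[simp]: "homog G \<tau> {c}"
  unfolding homog_def by auto

lemma nonempty_forb: assumes "hereditary T" "G0 \<in> T" "wf_graph S" "S \<notin> T" shows "verts S \<noteq> {}"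
proof
  have emp: "({}, {}) \<in> T" using empty_graph_in[OF assms(1,2)] .
  assume "verts S = {}"
  then have "edges S = {}" using assms(3) unfolding wf_graph_def by auto
  then have "S = ({}, {})" using \<open>verts S = {}\<close> graph_eqI[of S "({},{})"] by (simp add: verts_def edges_def)
  then show False using assms emp by simp
qed

lemma forb1:
  assumes "meager T" "G0 \<in> T" shows "\<exists>F c U. twopart T F {c} U False \<tau>"
proof -
  have hT: "hereditary T" using assms unfolding meager_def thin_def by blast
  have emp: "({}, {}) \<in> T" using empty_graph_in[OF hT assms(2)] .
  show ?thesis
  proof (cases \<tau>)
    case False
    from assms obtain S where S: "substar S" "S \<notin> T" unfolding meager_def by blast
    then obtain v where wf: "wf_graph S" and v: "\<forall>e\<in>edges S. v \<in> e" unfolding substar_def by blast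
    have ne: "verts S \<noteq> {}" using nonempty_forb[OF hT assms(2) wf S(2)] .
    define c where "c = (if v \<in> verts S then v else (SOME x. x \<in> verts S))"
    have c: "c \<in> verts S" unfolding c_def using ne by (simp add: some_in_eq)
    have "\<forall>x\<in>verts S - {c}. \<forall>y\<in>verts S - {c}. {x,y} \<notin> edges S"
    proof (intro ballI notI)
      fix x y assume x: "x \<in> verts S - {c}" and y: "y \<in> verts S - {c}" and e: "{x,y} \<in> edges S"
      have "v \<in> {x,y}" using bspec[OF v e] .
      then have vx: "v = x \<or> v = y" by blast
      then have "v \<in> verts S" using x y by blast
      then have "c = v" unfolding c_def by (simp only: if_True)
      then show False using vx x y by blast
    qed
    then have "homog S False (verts S - {c})" unfolding homog_def by blast
    then have hh: "homog S \<tau> (verts S - {c})" using False by simp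
    have veq: "verts S = {c} \<union> (verts S - {c})" using c by blast
    have "twopart T S {c} (verts S - {c}) False \<tau>"
      unfolding twopart_def
      apply (intro conjI)
           apply (rule wf)
          apply (rule S(2))
         apply (rule veq)
        apply blast
       apply (rule homog_single)
      apply (rule hh)
      done
    then show ?thesis by (intro exI[of _ S] exI[of _ c] exI[of _ "verts S - {c}"])
  next
    case True
    from assms obtain S where S: "antisubstar S" "S \<notin> T" unfolding meager_def by blast
    then obtain v where wf: "wf_graph S" and v: "\<forall>e\<in>edges (complement S). v \<in> e"
      unfolding antisubstar_def substar_def by blast
    have ne: "verts S \<noteq> {}" using nonempty_forb[OF hT assms(2) wf S(2)] .
    define c where "c = (if v \<in> verts S then v else (SOME x. x \<in> verts S))"
    have c: "c \<in> verts S" unfolding c_def using ne by (simp add: some_in_eq)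
    have "\<forall>x\<in>verts S - {c}. \<forall>y\<in>verts S - {c}. x \<noteq> y \<longrightarrow> {x,y} \<in> edges S"
    proof (intro ballI impI)
      fix x y assume x: "x \<in> verts S - {c}" and y: "y \<in> verts S - {c}" and xy: "x \<noteq> y"
      show "{x,y} \<in> edges S"
      proof (rule ccontr)
        assume "{x,y} \<notin> edges S"
        then have e: "{x,y} \<in> edges (complement S)" using x y xy
          unfolding complement_def edges_def verts_def by auto
        have "v \<in> {x,y}" using bspec[OF v e] .
        then have vx: "v = x \<or> v = y" by blast
        then have "v \<in> verts S" using x y by blast
        then have "c = v" unfolding c_def by (simp only: if_True)
        then show False using vx x y by blast
      qed
    qed
    then have "homog S True (verts S - {c})" unfolding homog_def by blast
    then have hh: "homog S \<tau> (verts S - {c})" using True by simp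
    have veq: "verts S = {c} \<union> (verts S - {c})" using c by blast
    have "twopart T S {c} (verts S - {c}) False \<tau>"
      unfolding twopart_def
      apply (intro conjI)
           apply (rule wf)
          apply (rule S(2))
         apply (rule veq)
        apply blast
       apply (rule homog_single)
      apply (rule hh)
      done
    then show ?thesis by (intro exI[of _ S] exI[of _ c] exI[of _ "verts S - {c}"])
  qed
qed

lemma ramsey_homog: "\<exists>R. \<forall>(H::graph) S. finite S \<longrightarrow> R \<le> card S \<longrightarrow> (\<exists>D\<subseteq>S. card D = r \<and> (\<exists>\<tau>. homog H \<tau> D))"
proof -
  obtain R where R: "\<forall>(V::nat set) (E::nat set set). finite V \<and> card V \<ge> R \<longrightarrow>
    (\<exists>D \<subseteq> V. card D = r \<and> Ramsey.clique D E \<or> card D = r \<and> Ramsey.indep D E)"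
    using ramsey2[of r r] by blast
  show ?thesis
  proof (rule exI[of _ R], intro allI impI)
    fix H :: graph and S :: "nat set" assume "finite S" "R \<le> card S"
    then obtain D where "D \<subseteq> S" "card D = r \<and> Ramsey.clique D (edges H) \<or> card D = r \<and> Ramsey.indep D (edges H)"
      using R by blast
    then show "\<exists>D\<subseteq>S. card D = r \<and> (\<exists>\<tau>. homog H \<tau> D)"
    proof (elim disjE conjE)
      assume "D \<subseteq> S" "card D = r" "Ramsey.clique D (edges H)"
      then have "homog H True D" unfolding Ramsey.clique_def homog_def by simp
      then show ?thesis using \<open>D \<subseteq> S\<close> \<open>card D = r\<close> by blast
    next
      assume "D \<subseteq> S" "card D = r" "Ramsey.indep D (edges H)"
      then have "homog H False D" unfolding Ramsey.indep_def homog_def by simp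
      then show ?thesis using \<open>D \<subseteq> S\<close> \<open>card D = r\<close> by blast
    qed
  qed
qed


lemma blocks_exist:
  assumes ram: "\<forall>S. finite S \<longrightarrow> R \<le> card S \<longrightarrow> (\<exists>D\<subseteq>S. card D = r \<and> (\<exists>\<tau>. homog H \<tau> D))"
    and r: "r \<ge> 1" and fin: "finite S"
  shows "\<exists>BS. (\<forall>D\<in>BS. D \<subseteq> S \<and> card D = r \<and> (\<exists>\<tau>. homog H \<tau> D)) \<and>
    (\<forall>D\<in>BS. \<forall>D'\<in>BS. D \<noteq> D' \<longrightarrow> D \<inter> D' = {}) \<and> card S < r * card BS + R \<and> finite BS"
  using fin
proof (induction "card S" arbitrary: S rule: less_induct)
  case less
  show ?case
  proof (cases "card S < R")
    case True
    then show ?thesis by (intro exI[of _ "{}"]) auto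
  next
    case False
    then have "R \<le> card S" by simp
    from ram[rule_format, OF less.prems this]
    obtain D where D: "D \<subseteq> S" "card D = r" "\<exists>\<tau>. homog H \<tau> D" by blast
    have Dne: "D \<noteq> {}" using D(2) r by auto
    have fD: "finite D" using D(1) less.prems finite_subset by blast
    have cS: "card (S - D) = card S - r" using D less.prems by (simp add: card_Diff_subset fD)
    have "card (S - D) < card S" using cS r D less.prems
      by (metis Dne card_seteq diff_less finite_Diff le_less_trans less_numeral_extra(1) nat_le_linear
          not_less_iff_gr_or_eq card_gt_0_iff fD card_mono)
    then obtain BS where BS: "\<forall>D\<in>BS. D \<subseteq> S - D' \<and> card D = r \<and> (\<exists>\<tau>. homog H \<tau> D)"
      "\<forall>D\<in>BS. \<forall>D'\<in>BS. D \<noteq> D' \<longrightarrow> D \<inter> D' = {}" "card (S - D) < r * card BS + R" "finite BS"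
      if "D' = D" for D'
      using less.hyps[of "S - D"] less.prems by auto
    have BS': "\<forall>E\<in>BS. E \<subseteq> S - D \<and> card E = r \<and> (\<exists>\<tau>. homog H \<tau> E)"
      "\<forall>E\<in>BS. \<forall>E'\<in>BS. E \<noteq> E' \<longrightarrow> E \<inter> E' = {}" "card (S - D) < r * card BS + R" "finite BS"
      using BS[OF refl] by auto
    have DnBS: "D \<notin> BS" using BS'(1) Dne by blast
    show ?thesis
    proof (intro exI[of _ "insert D BS"] conjI)
      show "\<forall>E\<in>insert D BS. E \<subseteq> S \<and> card E = r \<and> (\<exists>\<tau>. homog H \<tau> E)"
        using BS'(1) D by auto
      show "\<forall>E\<in>insert D BS. \<forall>E'\<in>insert D BS. E \<noteq> E' \<longrightarrow> E \<inter> E' = {}"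
        using BS'(1,2) by blast
      show "card S < r * card (insert D BS) + R"
        using BS'(3,4) DnBS cS False D(2) \<open>card (S - D) < card S\<close> by simp
      show "finite (insert D BS)" using BS'(4) by simp
    qed
  qed
qed

lemma groups_exist:
  assumes "finite S" "g \<ge> 1" "L * g \<le> card S"
  shows "\<exists>GG. GG \<subseteq> Pow S \<and> card GG = L \<and> (\<forall>x\<in>GG. card x = g) \<and>
     (\<forall>x\<in>GG. \<forall>y\<in>GG. x \<noteq> y \<longrightarrow> x \<inter> y = {}) \<and> finite GG"
  using assms
proof (induction L arbitrary: S)
  case 0
  then show ?case by (intro exI[of _ "{}"]) auto
next
  case (Suc L)
  then have "g \<le> card S" by simp
  then obtain x where x: "x \<subseteq> S" "card x = g" using obtain_subset_with_card_n by metis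
  have fx: "finite x" using x Suc.prems(1) finite_subset by blast
  have xne: "x \<noteq> {}" using x Suc.prems(2) by auto
  have c: "card (S - x) = card S - g" using x fx by (simp add: card_Diff_subset)
  have "L * g \<le> card (S - x)" using c Suc.prems(3) by simp
  then obtain GG where GG: "GG \<subseteq> Pow (S - x)" "card GG = L" "\<forall>y\<in>GG. card y = g"
    "\<forall>u\<in>GG. \<forall>v\<in>GG. u \<noteq> v \<longrightarrow> u \<inter> v = {}" "finite GG"
    using Suc.IH[of "S - x"] Suc.prems by auto
  have xn: "x \<notin> GG" using GG(1) xne by blast
  show ?case
  proof (intro exI[of _ "insert x GG"] conjI)
    show "insert x GG \<subseteq> Pow S" using GG(1) x by auto
    show "card (insert x GG) = Suc L" using GG xn by simp
    show "\<forall>y\<in>insert x GG. card y = g" using GG x by auto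
    show "\<forall>u\<in>insert x GG. \<forall>v\<in>insert x GG. u \<noteq> v \<longrightarrow> u \<inter> v = {}" using GG(1,4) by blast
    show "finite (insert x GG)" using GG by simp
  qed
qed

lemma count_fix:
  fixes P :: "'a set"
  assumes P: "finite P" and Q: "Q \<subseteq> P" and R: "R \<subseteq> Q" and B: "B \<subseteq> Pow P"
    and cl: "\<forall>E\<in>B. \<forall>E'. E' \<subseteq> P \<longrightarrow> E' - Q = E - Q \<longrightarrow> E' \<in> B"
  shows "card B = card {E\<in>B. E \<inter> Q = R} * 2 ^ card Q"
proof -
  define f where "f E = ((E - Q) \<union> R, E \<inter> Q)" for E
  define h where "h p = (fst p - Q) \<union> snd p" for p :: "'a set \<times> 'a set"
  have hf: "h (f a) = a" for a unfolding f_def h_def using R by auto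
  have fh: "f (h p) = p" if pm: "p \<in> {E \<in> B. E \<inter> Q = R} \<times> Pow Q" for p
  proof -
    obtain E1 S where p: "p = (E1, S)" "E1 \<inter> Q = R" "S \<subseteq> Q" using pm by (cases p) auto
    have "((E1 - Q) \<union> S - Q) \<union> R = E1" using p(2,3) by auto
    moreover have "((E1 - Q) \<union> S) \<inter> Q = S" using p(3) by blast
    ultimately show ?thesis unfolding f_def h_def p(1) by simp
  qed
  have fB: "f a \<in> {E \<in> B. E \<inter> Q = R} \<times> Pow Q" if E: "a \<in> B" for a
  proof -
    have aP: "a \<subseteq> P" using B E by blast
    have 1: "(a - Q) \<union> R \<subseteq> P" using aP R Q by blast
    have 2: "(a - Q) \<union> R - Q = a - Q" using R by blast
    have "(a - Q) \<union> R \<in> B" using cl E 1 2 by blast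
    moreover have "((a - Q) \<union> R) \<inter> Q = R" using R by blast
    ultimately show ?thesis unfolding f_def by simp
  qed
  have hB: "h p \<in> B" if pm: "p \<in> {E \<in> B. E \<inter> Q = R} \<times> Pow Q" for p
  proof -
    obtain E1 S where p: "p = (E1, S)" "E1 \<in> B" "S \<subseteq> Q" using pm by (cases p) auto
    have E1P: "E1 \<subseteq> P" using B p(2) by blast
    have 1: "(E1 - Q) \<union> S \<subseteq> P" using E1P p(3) Q by blast
    have 2: "(E1 - Q) \<union> S - Q = E1 - Q" using p(3) by blast
    have "(E1 - Q) \<union> S \<in> B" using cl p(2) 1 2 by blast
    then show ?thesis unfolding h_def p(1) by simp
  qed
  have "bij_betw f B ({E\<in>B. E \<inter> Q = R} \<times> Pow Q)"
    apply (rule bij_betw_byWitness[where f' = h])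
    subgoal using hf by blast
    subgoal using fh by blast
    subgoal using fB by (simp only: image_subset_iff) blast
    subgoal using hB by (simp only: image_subset_iff) blast
    done
  then have "card B = card ({E\<in>B. E \<inter> Q = R} \<times> Pow Q)" by (rule bij_betw_same_card)
  also have "\<dots> = card {E\<in>B. E \<inter> Q = R} * 2 ^ card Q"
  proof -
    have "finite Q" using P Q finite_subset by blast
    then show ?thesis by (simp add: card_cartesian_product card_Pow)
  qed
  finally show ?thesis .
qed

definition badset :: "nat set set \<Rightarrow> 'i set \<Rightarrow> ('i \<Rightarrow> nat set set) \<Rightarrow> ('i \<Rightarrow> nat set set) \<Rightarrow> nat set set set" where
  "badset P I Q R = {E \<in> Pow P. \<forall>s\<in>I. E \<inter> Q s \<noteq> R s}"

lemma badset_card: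
  assumes P: "finite P" and I: "finite I"
    and QR: "\<forall>s\<in>I. Q s \<subseteq> P \<and> R s \<subseteq> Q s \<and> card (Q s) \<le> K"
    and dj: "\<forall>s\<in>I. \<forall>t\<in>I. s \<noteq> t \<longrightarrow> Q s \<inter> Q t = {}"
  shows "real (card (badset P I Q R)) \<le> (1 - 1 / 2 ^ K) ^ card I * 2 ^ card P"
  using I QR dj
proof (induction I rule: finite_induct)
  case empty
  have "badset P {} Q R = Pow P" by (auto simp: badset_def)
  then show ?case using P by (simp add: card_Pow)
next
  case (insert s I)
  let ?B = "badset P I Q R"
  have IH: "real (card ?B) \<le> (1 - 1 / 2 ^ K) ^ card I * 2 ^ card P"
    using insert by auto
  have Qs: "Q s \<subseteq> P" "R s \<subseteq> Q s" "card (Q s) \<le> K" using insert.prems by auto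
  have eq: "badset P (insert s I) Q R = ?B - {E\<in>?B. E \<inter> Q s = R s}"
    unfolding badset_def by auto
  have cl: "\<forall>E\<in>?B. \<forall>E'. E' \<subseteq> P \<longrightarrow> E' - Q s = E - Q s \<longrightarrow> E' \<in> ?B"
  proof (intro ballI allI impI)
    fix E E' assume E: "E \<in> ?B" "E' \<subseteq> P" "E' - Q s = E - Q s"
    have "E' \<inter> Q t \<noteq> R t" if t: "t \<in> I" for t
    proof -
      have "Q t \<inter> Q s = {}" using insert.prems(2) t insert.hyps(2) by (metis insertCI)
      then have "E' \<inter> Q t = E \<inter> Q t" using E(3) by blast
      then show ?thesis using E(1) t unfolding badset_def by auto
    qed
    then show "E' \<in> ?B" using E(2) unfolding badset_def by auto
  qed
  have Bsub: "?B \<subseteq> Pow P" unfolding badset_def by auto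
  have fB: "finite ?B" using Bsub P by (meson finite_Pow_iff finite_subset)
  have cf: "card ?B = card {E\<in>?B. E \<inter> Q s = R s} * 2 ^ card (Q s)"
    using count_fix[OF P Qs(1) Qs(2) Bsub cl] .
  have "card (badset P (insert s I) Q R) = card ?B - card {E\<in>?B. E \<inter> Q s = R s}"
    unfolding eq using fB by (subst card_Diff_subset) auto
  then have "real (card (badset P (insert s I) Q R)) = real (card ?B) * (1 - 1 / 2 ^ card (Q s))"
    using cf by (simp add: of_nat_diff field_simps)
  also have "\<dots> \<le> real (card ?B) * (1 - 1 / 2 ^ K)"
    using Qs(3) by (intro mult_left_mono) (auto simp: field_simps)
  also have "\<dots> \<le> (1 - 1 / 2 ^ K) ^ card I * 2 ^ card P * (1 - 1 / 2 ^ K)"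
    using IH by (intro mult_right_mono) (auto simp: field_simps)
  also have "\<dots> = (1 - 1 / 2 ^ K) ^ card (insert s I) * 2 ^ card P"
    using insert.hyps by simp
  finally show ?case .
qed


definition slotQ :: "(nat \<Rightarrow> nat) \<Rightarrow> (nat \<Rightarrow> nat) \<Rightarrow> nat set \<Rightarrow> nat set \<Rightarrow> nat set set" where
  "slotQ \<phi> \<psi> U1 U2 = {{\<phi> x, \<psi> y} | x y. x \<in> U1 \<and> y \<in> U2}"
definition slotR :: "graph \<Rightarrow> (nat \<Rightarrow> nat) \<Rightarrow> (nat \<Rightarrow> nat) \<Rightarrow> nat set \<Rightarrow> nat set \<Rightarrow> nat set set" where
  "slotR F \<phi> \<psi> U1 U2 = {{\<phi> x, \<psi> y} | x y. x \<in> U1 \<and> y \<in> U2 \<and> {x, y} \<in> edges F}"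

lemma slotR_sub: "slotR F \<phi> \<psi> U1 U2 \<subseteq> slotQ \<phi> \<psi> U1 U2"
  unfolding slotR_def slotQ_def by blast

lemma slotQ_in: "z \<in> U1 \<Longrightarrow> w \<in> U2 \<Longrightarrow> {\<phi> z, \<psi> w} \<in> slotQ \<phi> \<psi> U1 U2"
  unfolding slotQ_def by blast

lemma slotR_iff:
  assumes "z \<in> U1" "w \<in> U2" "inj_on \<phi> U1" "inj_on \<psi> U2" "\<phi> ` U1 \<inter> \<psi> ` U2 = {}"
  shows "{\<phi> z, \<psi> w} \<in> slotR F \<phi> \<psi> U1 U2 \<longleftrightarrow> {z, w} \<in> edges F"
proof
  assume "{\<phi> z, \<psi> w} \<in> slotR F \<phi> \<psi> U1 U2"
  then obtain x y where xy: "{\<phi> z, \<psi> w} = {\<phi> x, \<psi> y}" "x \<in> U1" "y \<in> U2" "{x, y} \<in> edges F"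
    unfolding slotR_def by blast
  from xy(1) have "(\<phi> z = \<phi> x \<and> \<psi> w = \<psi> y) \<or> (\<phi> z = \<psi> y \<and> \<psi> w = \<phi> x)"
    by (simp add: doubleton_eq_iff)
  moreover have "\<phi> z \<noteq> \<psi> y" using assms(1,5) xy(3) by blast
  ultimately have "\<phi> z = \<phi> x" "\<psi> w = \<psi> y" by auto
  then have "z = x" "w = y" using assms xy(2,3) by (auto dest: inj_onD)
  then show "{z, w} \<in> edges F" using xy(4) by simp
next
  assume "{z, w} \<in> edges F"
  then show "{\<phi> z, \<psi> w} \<in> slotR F \<phi> \<psi> U1 U2" unfolding slotR_def using assms(1,2) by blast
qed

lemma homog_edge: "homog G \<tau> A \<Longrightarrow> x \<in> A \<Longrightarrow> y \<in> A \<Longrightarrow> x \<noteq> y \<Longrightarrow> ({x, y} \<in> edges G \<longleftrightarrow> \<tau>)"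
  unfolding homog_def by blast

locale inst =
  fixes T :: "graph set" and l n :: nat and Gs :: "nat \<Rightarrow> graph"
  assumes hT: "hereditary T"
    and GsT: "\<forall>i<l. wf_graph (Gs i) \<and> Gs i \<in> T"
    and disj: "\<forall>i<l. \<forall>j<l. i \<noteq> j \<longrightarrow> verts (Gs i) \<inter> verts (Gs j) = {}"
    and cover: "(\<Union>i<l. verts (Gs i)) = {1..n}"
begin

abbreviation X :: "nat \<Rightarrow> nat set" where "X i \<equiv> verts (Gs i)"
definition V :: "nat set" where "V = {1..n}"
definition E0 :: "nat set set" where "E0 = (\<Union>i<l. edges (Gs i))"
definition P :: "nat set set" where
  "P = {{x, y} | x y. \<exists>i<l. \<exists>k<l. i \<noteq> k \<and> x \<in> X i \<and> y \<in> X k}"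
definition mk :: "nat set set \<Rightarrow> graph" where "mk E = (V, E0 \<union> E)"

lemma verts_mk[simp]: "verts (mk E) = V" by (simp add: mk_def verts_def)
lemma edges_mk[simp]: "edges (mk E) = E0 \<union> E" by (simp add: mk_def edges_def)

lemma wfX: "i < l \<Longrightarrow> wf_graph (Gs i)" using GsT by blast
lemma finX: "i < l \<Longrightarrow> finite (X i)" using wfX wf_graph_def by blast
lemma X_sub: "i < l \<Longrightarrow> X i \<subseteq> V" using cover V_def by blast
lemma finV: "finite V" by (simp add: V_def)
lemma in_part: "v \<in> V \<Longrightarrow> \<exists>i<l. v \<in> X i" using cover V_def by blast
lemma disjX: "i < l \<Longrightarrow> j < l \<Longrightarrow> x \<in> X i \<Longrightarrow> x \<in> X j \<Longrightarrow> i = j" using disj by blast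

lemma edgeGs: "i < l \<Longrightarrow> e \<in> edges (Gs i) \<Longrightarrow> \<exists>x y. x \<noteq> y \<and> e = {x, y} \<and> x \<in> X i \<and> y \<in> X i"
  using wfX unfolding wf_graph_def by blast

lemma P_not_sub: assumes "e \<in> P" "i < l" shows "\<not> e \<subseteq> X i"
proof
  assume sub: "e \<subseteq> X i"
  obtain x y i' k where xy: "e = {x, y}" "i' < l" "k < l" "i' \<noteq> k" "x \<in> X i'" "y \<in> X k"
    using assms(1) unfolding P_def by blast
  have "x \<in> X i" "y \<in> X i" using sub xy(1) by auto
  then have "i' = i" "k = i" using disjX[OF xy(2) assms(2) xy(5)] disjX[OF xy(3) assms(2) xy(6)] by auto
  then show False using xy(4) by simp
qed

lemma P_sub_V: "P \<subseteq> Pow V" unfolding P_def using X_sub by blast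
lemma finP: "finite P" using P_sub_V finV by (meson finite_Pow_iff finite_subset)

lemma E0P: "E0 \<inter> P = {}"
proof -
  have "e \<notin> P" if "e \<in> E0" for e
  proof -
    from that obtain i where i: "i < l" "e \<in> edges (Gs i)" unfolding E0_def by blast
    then have "e \<subseteq> X i" using edgeGs by blast
    then show ?thesis using P_not_sub i(1) by blast
  qed
  then show ?thesis by blast
qed

lemma cross_in_P: "k < l \<Longrightarrow> i < l \<Longrightarrow> k \<noteq> i \<Longrightarrow> x \<in> X k \<Longrightarrow> y \<in> X i \<Longrightarrow> {x, y} \<in> P"
  unfolding P_def by blast

lemma induced_mk: assumes "E \<subseteq> P" "i < l" shows "induced (mk E) (X i) = Gs i"
proof (rule graph_eqI)
  show "verts (induced (mk E) (X i)) = verts (Gs i)" by simp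
  have "e \<in> edges (Gs i)" if e: "e \<in> E0 \<union> E" "e \<subseteq> X i" for e
  proof (cases "e \<in> E0")
    case True
    then obtain j where j: "j < l" "e \<in> edges (Gs j)" unfolding E0_def by blast
    then obtain x y where xy: "x \<noteq> y" "e = {x, y}" "x \<in> X j" "y \<in> X j" using edgeGs by blast
    have "x \<in> X i" using e(2) xy by blast
    then have "j = i" using disjX[OF j(1) assms(2) xy(3)] by simp
    then show ?thesis using j by simp
  next
    case False
    then have "e \<in> P" using e assms(1) by blast
    then show ?thesis using P_not_sub e(2) assms(2) by blast
  qed
  moreover have "e \<in> E0 \<and> e \<subseteq> X i" if "e \<in> edges (Gs i)" for e
    using that assms(2) edgeGs[OF assms(2) that] unfolding E0_def by blast
  ultimately show "edges (induced (mk E) (X i)) = edges (Gs i)" by auto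
qed

lemma wf_mk: assumes "E \<subseteq> P" shows "wf_graph (mk E)"
  unfolding wf_graph_def
proof (intro conjI ballI)
  show "finite (verts (mk E))" using finV by simp
  fix e assume "e \<in> edges (mk E)"
  then have "e \<in> E0 \<or> e \<in> P" using assms by auto
  then show "\<exists>x y. x \<noteq> y \<and> e = {x, y} \<and> x \<in> verts (mk E) \<and> y \<in> verts (mk E)"
  proof
    assume "e \<in> E0"
    then obtain j where j: "j < l" "e \<in> edges (Gs j)" unfolding E0_def by blast
    then show ?thesis using edgeGs[OF j] X_sub[OF j(1)] by auto
  next
    assume "e \<in> P"
    then obtain x y i k where xy: "e = {x, y}" "i < l" "k < l" "i \<noteq> k" "x \<in> X i" "y \<in> X k"
      unfolding P_def by blast
    have "x \<noteq> y" using disjX xy by blast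
    then show ?thesis using xy X_sub by auto
  qed
qed

lemma mk_ext: "E \<subseteq> P \<Longrightarrow> mk E \<in> extensions l Gs"
  unfolding extensions_def using wf_mk induced_mk cover V_def by auto

lemma ext_mk: assumes "G \<in> extensions l Gs" shows "G = mk (edges G \<inter> P)"
proof (rule graph_eqI)
  have wf: "wf_graph G" and vG: "verts G = V" and ind: "\<forall>i<l. induced G (X i) = Gs i"
    using assms cover unfolding extensions_def V_def by auto
  show "verts G = verts (mk (edges G \<inter> P))" using vG by simp
  have "e \<in> E0 \<or> e \<in> P" if e: "e \<in> edges G" for e
  proof -
    obtain x y where xy: "x \<noteq> y" "e = {x, y}" "x \<in> V" "y \<in> V" using wf e vG unfolding wf_graph_def by blast
    obtain i k where ik: "i < l" "k < l" "x \<in> X i" "y \<in> X k" using in_part xy by blast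
    show ?thesis
    proof (cases "i = k")
      case True
      then have "e \<in> edges (induced G (X i))" using e xy ik by simp
      then have "e \<in> edges (Gs i)" using ind ik(1) by simp
      then show ?thesis unfolding E0_def using ik(1) by blast
    next
      case False
      then show ?thesis using cross_in_P ik xy by (metis)
    qed
  qed
  moreover have "e \<in> edges G" if e0: "e \<in> E0" for e
  proof -
    obtain i where i: "i < l" "e \<in> edges (Gs i)" using e0 unfolding E0_def by blast
    then have "e \<in> edges (induced G (X i))" using ind by simp
    then show ?thesis by simp
  qed
  ultimately show "edges G = edges (mk (edges G \<inter> P))" by auto
qed

lemma ext_eq: "extensions l Gs = mk ` Pow P"
proof
  show "extensions l Gs \<subseteq> mk ` Pow P"
  proof
    fix G assume "G \<in> extensions l Gs"
    then have "G = mk (edges G \<inter> P)" by (rule ext_mk)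
    then show "G \<in> mk ` Pow P" by blast
  qed
  show "mk ` Pow P \<subseteq> extensions l Gs" using mk_ext by blast
qed

lemma inj_mk: "inj_on mk (Pow P)"
proof (rule inj_onI)
  fix E E' assume "E \<in> Pow P" "E' \<in> Pow P" "mk E = mk E'"
  then have "(E0 \<union> E) \<inter> P = (E0 \<union> E') \<inter> P" by (metis edges_mk)
  then show "E = E'" using E0P \<open>E \<in> Pow P\<close> \<open>E' \<in> Pow P\<close> by blast
qed

lemma card_ext: "card (extensions l Gs) = 2 ^ card P"
  using ext_eq inj_mk finP by (simp add: card_image card_Pow)

lemma card_ext_filter: "card {G \<in> extensions l Gs. Q G} = card {E \<in> Pow P. Q (mk E)}"
proof -
  have "{G \<in> extensions l Gs. Q G} = mk ` {E \<in> Pow P. Q (mk E)}" using ext_eq by auto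
  moreover have "inj_on mk {E \<in> Pow P. Q (mk E)}" using inj_mk by (rule inj_on_subset) auto
  ultimately show ?thesis by (simp add: card_image)
qed

lemma adj_same: assumes "E \<subseteq> P" "i < l" "x \<in> X i" "y \<in> X i"
  shows "{x, y} \<in> edges (mk E) \<longleftrightarrow> {x, y} \<in> edges (Gs i)"
proof -
  have "edges (induced (mk E) (X i)) = edges (Gs i)" using induced_mk[OF assms(1,2)] by simp
  then show ?thesis using assms(3,4) by auto
qed

lemma adj_cross: assumes "E \<subseteq> P" "k < l" "i < l" "k \<noteq> i" "x \<in> X k" "y \<in> X i"
  shows "{x, y} \<in> edges (mk E) \<longleftrightarrow> {x, y} \<in> E"
proof -
  have "{x, y} \<in> P" using cross_in_P assms by blast
  then have "{x, y} \<notin> E0" using E0P by blast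
  then show ?thesis by simp
qed

lemma embed:
  assumes ki: "k < l" "i < l" "k \<noteq> i" and CD: "C \<subseteq> X k" "D \<subseteq> X i"
    and hC: "homog (Gs k) \<tau>1 C" and hD: "homog (Gs i) \<tau>2 D"
    and tp: "twopart T F U1 U2 \<tau>1 \<tau>2"
    and \<phi>: "inj_on \<phi> U1" "\<phi> ` U1 \<subseteq> C" and \<psi>: "inj_on \<psi> U2" "\<psi> ` U2 \<subseteq> D"
    and E: "E \<subseteq> P" and good: "E \<inter> slotQ \<phi> \<psi> U1 U2 = slotR F \<phi> \<psi> U1 U2"
    and Y: "C \<union> D \<subseteq> Y"
  shows "induced (mk E) Y \<notin> T"
proof -
  have wfF: "wf_graph F" and FT: "F \<notin> T" and vF: "verts F = U1 \<union> U2" and dU: "U1 \<inter> U2 = {}"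
    and h1: "homog F \<tau>1 U1" and h2: "homog F \<tau>2 U2"
    using tp unfolding twopart_def by auto
  have dCD: "C \<inter> D = {}" using CD disjX ki by blast
  have dimg: "\<phi> ` U1 \<inter> \<psi> ` U2 = {}" using dCD \<phi>(2) \<psi>(2) by blast
  define f where "f z = (if z \<in> U1 then \<phi> z else \<psi> z)" for z
  have f1: "z \<in> U1 \<Longrightarrow> f z = \<phi> z" for z by (simp add: f_def)
  have f2: "z \<in> U2 \<Longrightarrow> f z = \<psi> z" for z using dU by (auto simp: f_def)
  have inj: "inj_on f (verts F)"
  proof (rule inj_onI)
    fix z w assume z: "z \<in> verts F" and w: "w \<in> verts F" and eq: "f z = f w"
    show "z = w"
    proof (cases "z \<in> U1"; cases "w \<in> U1")
      assume "z \<in> U1" "w \<in> U1" then show ?thesis using eq f1 \<phi>(1) by (metis inj_onD)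
    next
      assume "z \<in> U1" "w \<notin> U1"
      then have "w \<in> U2" using w vF by blast
      then show ?thesis using eq f1 f2 dimg \<open>z \<in> U1\<close> by (metis disjoint_iff image_eqI)
    next
      assume "z \<notin> U1" "w \<in> U1"
      then have "z \<in> U2" using z vF by blast
      then show ?thesis using eq f1 f2 dimg \<open>w \<in> U1\<close> by (metis disjoint_iff image_eqI)
    next
      assume "z \<notin> U1" "w \<notin> U1"
      then have "z \<in> U2" "w \<in> U2" using z w vF by auto
      then show ?thesis using eq f2 \<psi>(1) by (metis inj_onD)
    qed
  qed
  have same: "({z, w} \<in> edges F \<longleftrightarrow> {f z, f w} \<in> edges (mk E))"
    if U: "z \<in> U" "w \<in> U" and hU: "homog F \<tau> U" and hA: "homog (Gs j) \<tau> A"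
      and j: "j < l" and A: "A \<subseteq> X j" and fU: "f ` U \<subseteq> A" and injU: "inj_on f U"
    for z w U \<tau> j A
  proof (cases "z = w")
    case True
    have "{z, z} \<notin> edges F" using wf_loop[OF wfF] .
    moreover have "{f z, f z} \<notin> edges (Gs j)" using wf_loop wfX[OF j] by blast
    moreover have "f z \<in> X j" using fU A U by blast
    ultimately show ?thesis using True adj_same[OF E j] by blast
  next
    case False
    have "f z \<noteq> f w" using injU U False by (metis inj_onD)
    moreover have "f z \<in> A" "f w \<in> A" using fU U by auto
    ultimately have "{f z, f w} \<in> edges (Gs j) \<longleftrightarrow> \<tau>" using homog_edge[OF hA] by blast
    moreover have "{z, w} \<in> edges F \<longleftrightarrow> \<tau>" using homog_edge[OF hU U False] .
    moreover have "{f z, f w} \<in> edges (mk E) \<longleftrightarrow> {f z, f w} \<in> edges (Gs j)"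
      using adj_same[OF E j] \<open>f z \<in> A\<close> \<open>f w \<in> A\<close> A by blast
    ultimately show ?thesis by blast
  qed
  have fU1: "f ` U1 \<subseteq> C" using f1 \<phi>(2) by auto
  have fU2: "f ` U2 \<subseteq> D" using f2 \<psi>(2) by auto
  have "f ` verts F = f ` U1 \<union> f ` U2" using vF by (simp add: image_Un)
  then have sub: "f ` verts F \<subseteq> Y" using fU1 fU2 Y by blast
  have UU: "U1 \<subseteq> verts F" "U2 \<subseteq> verts F" using vF by auto
  have injU1: "inj_on f U1" using inj_on_subset[OF inj UU(1)] .
  have injU2: "inj_on f U2" using inj_on_subset[OF inj UU(2)] .
  have cross: "({z, w} \<in> edges F \<longleftrightarrow> {f z, f w} \<in> edges (mk E))" if "z \<in> U1" "w \<in> U2" for z w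
  proof -
    have "f z \<in> X k" "f w \<in> X i" using that fU1 fU2 CD by auto
    then have "{f z, f w} \<in> edges (mk E) \<longleftrightarrow> {f z, f w} \<in> E" using adj_cross[OF E ki] by blast
    also have "\<dots> \<longleftrightarrow> {\<phi> z, \<psi> w} \<in> E" using that f1 f2 by simp
    also have "\<dots> \<longleftrightarrow> {\<phi> z, \<psi> w} \<in> slotR F \<phi> \<psi> U1 U2"
      using good slotQ_in[OF that] by blast
    also have "\<dots> \<longleftrightarrow> {z, w} \<in> edges F" using slotR_iff[OF that \<phi>(1) \<psi>(1) dimg] .
    finally show ?thesis by simp
  qed
  have adj: "\<forall>z\<in>verts F. \<forall>w\<in>verts F. ({z, w} \<in> edges F \<longleftrightarrow> {f z, f w} \<in> edges (mk E))"
  proof (intro ballI)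
    fix z w assume z: "z \<in> verts F" and w: "w \<in> verts F"
    show "({z, w} \<in> edges F \<longleftrightarrow> {f z, f w} \<in> edges (mk E))"
    proof (cases "z \<in> U1"; cases "w \<in> U1")
      assume "z \<in> U1" "w \<in> U1"
      then show ?thesis using same[OF _ _ h1 hC ki(1) CD(1) fU1 injU1] by blast
    next
      assume "z \<in> U1" "w \<notin> U1"
      then have "w \<in> U2" using w vF by blast
      then show ?thesis using cross \<open>z \<in> U1\<close> by blast
    next
      assume "z \<notin> U1" "w \<in> U1"
      then have "z \<in> U2" using z vF by blast
      then show ?thesis using cross[OF \<open>w \<in> U1\<close> \<open>z \<in> U2\<close>] by (simp add: insert_commute)
    next
      assume "z \<notin> U1" "w \<notin> U1"
      then have "z \<in> U2" "w \<in> U2" using z w vF by auto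
      then show ?thesis using same[OF _ _ h2 hD ki(2) CD(2) fU2 injU2] by blast
    qed
  qed
  show ?thesis using forbidden_copy[OF hT wfF FT inj sub adj] .
qed

end


locale det = inst +
  fixes a :: nat
  assumes a1: "a \<ge> 1" and big: "\<forall>k<l. l * a \<le> card (X k)"
begin

definition Good1 :: "nat set set \<Rightarrow> bool" where
  "Good1 E \<longleftrightarrow> (\<forall>k<l. \<forall>i<l. k \<noteq> i \<longrightarrow> (\<forall>A B Y. A \<subseteq> X k \<longrightarrow> B \<subseteq> X i \<longrightarrow> a \<le> card A \<longrightarrow>
      a \<le> card B \<longrightarrow> A \<union> B \<subseteq> Y \<longrightarrow> induced (mk E) Y \<notin> T))"

definition Good2 :: "nat set set \<Rightarrow> bool" where
  "Good2 E \<longleftrightarrow> (\<forall>i<l. \<forall>v\<in>V - X i. \<forall>W Y. W \<subseteq> X i \<longrightarrow> card (X i - W) \<le> l * a \<longrightarrow>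
      insert v W \<subseteq> Y \<longrightarrow> induced (mk E) Y \<notin> T)"

lemma X_partition: assumes E: "E \<subseteq> P" shows "Tl_partition T l (mk E) X"
  unfolding Tl_partition_def
proof (intro conjI allI impI)
  show "(\<Union>i<l. X i) = verts (mk E)" using cover V_def by simp
  fix i assume i: "i < l"
  show "induced (mk E) (X i) \<in> T" using induced_mk[OF E i] GsT i by simp
  fix j assume "j < l" "i \<noteq> j"
  then show "X i \<inter> X j = {}" using disj i by blast
qed

lemma unique_if_good:
  assumes E: "E \<subseteq> P" and g1: "Good1 E" and g2: "Good2 E"
  shows "unique_Tl_partition T l (mk E) X"
  unfolding unique_Tl_partition_def
proof (intro conjI allI impI)
  show "Tl_partition T l (mk E) X" using X_partition[OF E] .
  fix Y assume Yp: "Tl_partition T l (mk E) Y"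
  have YU: "(\<Union>j<l. Y j) = V" and Ydisj: "\<forall>i<l. \<forall>j<l. i \<noteq> j \<longrightarrow> Y i \<inter> Y j = {}"
    and YT: "\<forall>j<l. induced (mk E) (Y j) \<in> T"
    using Yp unfolding Tl_partition_def by auto
  have Ysub: "j < l \<Longrightarrow> Y j \<subseteq> V" for j using YU by blast
  have two_big: False if "j < l" "k < l" "i < l" "k \<noteq> i" "a \<le> card (Y j \<inter> X k)" "a \<le> card (Y j \<inter> X i)"
    for j k i
  proof -
    have "induced (mk E) (Y j) \<notin> T"
      apply (rule g1[unfolded Good1_def, rule_format, of k i "Y j \<inter> X k" "Y j \<inter> X i" "Y j"])
      using that by auto
    then show False using YT that(1) by blast
  qed
  have main: "\<exists>j<l. a \<le> card (Y j \<inter> X k)" if k: "k < l" for k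
  proof (rule ccontr)
    assume "\<not> ?thesis"
    then have lt: "\<forall>j\<in>{..<l}. card (Y j \<inter> X k) < a" by auto
    have "X k = (\<Union>j<l. Y j \<inter> X k)" using X_sub[OF k] YU by blast
    then have "card (X k) \<le> (\<Sum>j<l. card (Y j \<inter> X k))"
      by (metis card_UN_le finite_lessThan)
    also have "\<dots> < (\<Sum>j<l. a)"
      using lt k by (intro sum_strict_mono) auto
    also have "\<dots> = l * a" by simp
    finally show False using big k by (meson not_less)
  qed
  define \<sigma> where "\<sigma> k = (SOME j. j < l \<and> a \<le> card (Y j \<inter> X k))" for k
  have \<sigma>: "\<sigma> k < l" "a \<le> card (Y (\<sigma> k) \<inter> X k)" if "k < l" for k
    using someI_ex[OF main[OF that]] unfolding \<sigma>_def by auto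
  have inj: "inj_on \<sigma> {..<l}"
  proof (rule inj_onI)
    fix k i assume ki: "k \<in> {..<l}" "i \<in> {..<l}" "\<sigma> k = \<sigma> i"
    show "k = i"
    proof (rule ccontr)
      assume ne: "k \<noteq> i"
      have "a \<le> card (Y (\<sigma> k) \<inter> X k)" using \<sigma>(2) ki(1) by simp
      moreover have "a \<le> card (Y (\<sigma> k) \<inter> X i)" using \<sigma>(2)[of i] ki(2,3) by simp
      ultimately show False using two_big[of "\<sigma> k" k i] \<sigma>(1) ki ne by auto
    qed
  qed
  have surj: "\<sigma> ` {..<l} = {..<l}"
    using \<sigma>(1) inj by (intro endo_inj_surj) auto
  have small: "card (Y j \<inter> X i) < a" if "j < l" "i < l" "j \<noteq> \<sigma> i" for j i
  proof -
    have "j \<in> \<sigma> ` {..<l}" using surj \<open>j < l\<close> by simp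
    then obtain i' where i': "i' < l" "j = \<sigma> i'" by blast
    then have "i' \<noteq> i" using that(3) by auto
    then show ?thesis using two_big[of j i' i] \<sigma>[OF i'(1)] i' that by (meson not_less)
  qed
  have XY: "X k \<subseteq> Y (\<sigma> k)" if k: "k < l" for k
  proof
    fix v assume v: "v \<in> X k"
    then have "v \<in> V" using X_sub k by blast
    then obtain j where j: "j < l" "v \<in> Y j" using YU by blast
    have "j \<in> \<sigma> ` {..<l}" using surj j(1) by simp
    then obtain i where i: "i < l" "j = \<sigma> i" by blast
    show "v \<in> Y (\<sigma> k)"
    proof (cases "i = k")
      case True then show ?thesis using i j by simp
    next
      case False
      define W where "W = Y j \<inter> X i"
      have "X i - W \<subseteq> (\<Union>j'\<in>{..<l} - {j}. Y j' \<inter> X i)" using X_sub[OF i(1)] YU unfolding W_def by blast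
      moreover have "finite (\<Union>j'\<in>{..<l} - {j}. Y j' \<inter> X i)"
        using finX[OF i(1)] by auto
      ultimately have "card (X i - W) \<le> card (\<Union>j'\<in>{..<l} - {j}. Y j' \<inter> X i)"
        by (rule card_mono[rotated])
      also have "\<dots> \<le> (\<Sum>j'\<in>{..<l} - {j}. card (Y j' \<inter> X i))" by (rule card_UN_le) simp
      also have "\<dots> \<le> (\<Sum>j'\<in>{..<l} - {j}. a)"
        using small i by (intro sum_mono) (auto intro: less_imp_le)
      also have "\<dots> \<le> l * a"
      proof -
        have "card ({..<l} - {j}) \<le> l" using card_Diff1_le[of "{..<l}" j] by simp
        then show ?thesis by simp
      qed
      finally have cW: "card (X i - W) \<le> l * a" .
      have vX: "v \<in> V - X i" using \<open>v \<in> V\<close> v disjX k i(1) False by blast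
      have "induced (mk E) (Y j) \<notin> T"
        apply (rule g2[unfolded Good2_def, rule_format, of i v W "Y j"])
        using i(1) vX cW j(2) unfolding W_def by auto
      then show ?thesis using YT j(1) by blast
    qed
  qed
  have YX: "Y (\<sigma> k) = X k" if k: "k < l" for k
  proof
    show "X k \<subseteq> Y (\<sigma> k)" using XY k .
    show "Y (\<sigma> k) \<subseteq> X k"
    proof
      fix w assume w: "w \<in> Y (\<sigma> k)"
      then have "w \<in> V" using Ysub \<sigma>(1) k by blast
      then obtain k' where k': "k' < l" "w \<in> X k'" using in_part by blast
      then have "w \<in> Y (\<sigma> k')" using XY by blast
      then have "\<sigma> k = \<sigma> k'" using Ydisj w \<sigma>(1) k k'(1) by blast
      then have "k = k'" using inj k k'(1) by (meson inj_onD lessThan_iff)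
      then show "w \<in> X k" using k' by simp
    qed
  qed
  have "Y ` {..<l} = Y ` \<sigma> ` {..<l}" using surj by simp
  also have "\<dots> = X ` {..<l}" unfolding image_image using YX by auto
  finally show "Y ` {..<l} = X ` {..<l}" .
qed

end


definition cross :: "nat set \<Rightarrow> nat set \<Rightarrow> nat set set" where
  "cross C D = {{x, y} | x y. x \<in> C \<and> y \<in> D}"

lemma slotQ_sub_cross: "\<phi> ` U1 \<subseteq> C \<Longrightarrow> \<psi> ` U2 \<subseteq> D \<Longrightarrow> slotQ \<phi> \<psi> U1 U2 \<subseteq> cross C D"
  unfolding slotQ_def cross_def by blast

lemma card_slotQ: assumes "finite U1" "finite U2" shows "card (slotQ \<phi> \<psi> U1 U2) \<le> card U1 * card U2"
proof -
  have "slotQ \<phi> \<psi> U1 U2 = (\<lambda>p. {\<phi> (fst p), \<psi> (snd p)}) ` (U1 \<times> U2)"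
    unfolding slotQ_def by force
  moreover have "card ((\<lambda>p. {\<phi> (fst p), \<psi> (snd p)}) ` (U1 \<times> U2)) \<le> card (U1 \<times> U2)"
    by (rule card_image_le) (simp add: assms)
  ultimately show ?thesis by (simp add: card_cartesian_product)
qed

lemma cross_disj:
  assumes "C \<inter> C' = {} \<or> D \<inter> D' = {}" "(C \<union> C') \<inter> (D \<union> D') = {}"
  shows "cross C D \<inter> cross C' D' = {}"
proof -
  have False if "x \<in> C" "y \<in> D" "x' \<in> C'" "y' \<in> D'" "{x, y} = {x', y'}" for x y x' y'
  proof -
    from that(5) have "(x = x' \<and> y = y') \<or> (x = y' \<and> y = x')" by (simp add: doubleton_eq_iff)
    then show False using assms that(1-4) by blast
  qed
  then show ?thesis unfolding cross_def by blast
qed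

lemma some_group_inside:
  assumes Bl: "\<forall>D\<in>Bl. \<forall>D'\<in>Bl. D \<noteq> D' \<longrightarrow> D \<inter> D' = {}" "\<forall>D\<in>Bl. D \<subseteq> S"
    and GG: "GG \<subseteq> Pow Bl" "\<forall>x\<in>GG. \<forall>y\<in>GG. x \<noteq> y \<longrightarrow> x \<inter> y = {}" "finite GG"
    and fin: "finite S" and lt: "card (S - W) < card GG"
  shows "\<exists>grp\<in>GG. \<forall>D\<in>grp. D \<subseteq> W"
proof (rule ccontr)
  assume "\<not> ?thesis"
  then have "\<forall>grp\<in>GG. \<exists>D\<in>grp. \<exists>x. x \<in> D \<and> x \<notin> W" by blast
  then obtain Df xf where f: "\<forall>grp\<in>GG. Df grp \<in> grp \<and> xf grp \<in> Df grp \<and> xf grp \<notin> W"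
    by metis
  have "inj_on xf GG"
  proof (rule inj_onI)
    fix g1 g2 assume g: "g1 \<in> GG" "g2 \<in> GG" "xf g1 = xf g2"
    have D: "Df g1 \<in> Bl" "Df g2 \<in> Bl" using f g GG(1) by blast+
    have "Df g1 \<inter> Df g2 \<noteq> {}" using f g by (metis disjoint_iff)
    then have "Df g1 = Df g2" using Bl(1) D by blast
    then have "g1 \<inter> g2 \<noteq> {}" using f g by (metis disjoint_iff)
    then show "g1 = g2" using GG(2) g by blast
  qed
  moreover have "xf ` GG \<subseteq> S - W"
  proof
    fix x assume "x \<in> xf ` GG"
    then obtain grp where "grp \<in> GG" "x = xf grp" by blast
    then show "x \<in> S - W" using f GG(1) Bl(2) by blast
  qed
  ultimately have "card GG \<le> card (S - W)"
    using fin by (metis card_inj_on_le finite_Diff)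
  then show False using lt by simp
qed

definition blockfam :: "nat \<Rightarrow> nat \<Rightarrow> graph \<Rightarrow> nat set \<Rightarrow> nat set set \<Rightarrow> bool" where
  "blockfam r R H S BS \<longleftrightarrow> (\<forall>D\<in>BS. D \<subseteq> S \<and> card D = r \<and> (\<exists>\<tau>. homog H \<tau> D)) \<and>
    (\<forall>D\<in>BS. \<forall>D'\<in>BS. D \<noteq> D' \<longrightarrow> D \<inter> D' = {}) \<and> card S < r * card BS + R \<and> finite BS"

definition tp :: "graph \<Rightarrow> nat set \<Rightarrow> bool" where "tp H D = (SOME \<tau>. homog H \<tau> D)"
definition emb :: "nat set \<Rightarrow> nat set \<Rightarrow> nat \<Rightarrow> nat" where
  "emb U C = (SOME f. inj_on f U \<and> f ` U \<subseteq> C)"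

lemma emb: assumes "finite U" "finite C" "card U \<le> card C"
  shows "inj_on (emb U C) U" "emb U C ` U \<subseteq> C"
proof -
  have "\<exists>f. inj_on f U \<and> f ` U \<subseteq> C" using card_le_inj[OF assms] by blast
  then have "inj_on (emb U C) U \<and> emb U C ` U \<subseteq> C" unfolding emb_def by (rule someI_ex)
  then show "inj_on (emb U C) U" "emb U C ` U \<subseteq> C" by auto
qed

lemma tp: "homog H \<tau> D \<Longrightarrow> homog H (tp H D) D"
  unfolding tp_def by (rule someI)

lemma twopart_fin: "twopart T F U1 U2 t1 t2 \<Longrightarrow> finite U1 \<and> finite U2"
  unfolding twopart_def wf_graph_def by (metis finite_Un)

locale prob = det +
  fixes r R :: nat and F2 :: "bool \<Rightarrow> bool \<Rightarrow> graph" and A2 B2 :: "bool \<Rightarrow> bool \<Rightarrow> nat set"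
    and F1 :: "bool \<Rightarrow> graph" and c1 :: "bool \<Rightarrow> nat" and B1 :: "bool \<Rightarrow> nat set" and g :: nat
  assumes r1: "r \<ge> 1"
    and ram: "\<forall>(H::graph) S. finite S \<longrightarrow> R \<le> card S \<longrightarrow> (\<exists>D\<subseteq>S. card D = r \<and> (\<exists>\<tau>. homog H \<tau> D))"
    and F2: "\<forall>t1 t2. twopart T (F2 t1 t2) (A2 t1 t2) (B2 t1 t2) t1 t2 \<and> card (A2 t1 t2) \<le> r \<and> card (B2 t1 t2) \<le> r"
    and F1: "\<forall>t. twopart T (F1 t) {c1 t} (B1 t) False t \<and> card (B1 t) \<le> r"
    and g1: "g \<ge> 1"
    and gbig: "\<forall>i<l. (l * a + 1) * g \<le> (card (X i) - R) div r"
begin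

definition blocks :: "graph \<Rightarrow> nat set \<Rightarrow> nat set set" where
  "blocks H S = (SOME BS. blockfam r R H S BS)"

lemma blocks: assumes "finite S" shows "blockfam r R H S (blocks H S)"
proof -
  have "\<forall>S. finite S \<longrightarrow> R \<le> card S \<longrightarrow> (\<exists>D\<subseteq>S. card D = r \<and> (\<exists>\<tau>. homog H \<tau> D))"
    using ram by blast
  from blocks_exist[OF this r1 assms] have "\<exists>BS. blockfam r R H S BS" unfolding blockfam_def .
  then show ?thesis unfolding blocks_def by (rule someI_ex)
qed

lemma blocks_count: assumes "finite S" shows "(card S - R) div r \<le> card (blocks H S)"
proof -
  have "card S < r * card (blocks H S) + R" using blocks[OF assms] unfolding blockfam_def by blast
  then have "card S - R \<le> r * card (blocks H S)" by linarith
  then have "(card S - R) div r \<le> (r * card (blocks H S)) div r" by (rule div_le_mono)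
  then show ?thesis using r1 by simp
qed

definition rho :: real where "rho = 1 - 1 / 2 ^ (r * r)"

definition q1 :: "nat \<Rightarrow> nat \<Rightarrow> nat set \<times> nat set \<Rightarrow> nat set set" where
  "q1 k i CD = (case CD of (C, D) \<Rightarrow>
     slotQ (emb (A2 (tp (Gs k) C) (tp (Gs i) D)) C) (emb (B2 (tp (Gs k) C) (tp (Gs i) D)) D)
       (A2 (tp (Gs k) C) (tp (Gs i) D)) (B2 (tp (Gs k) C) (tp (Gs i) D)))"
definition r1f :: "nat \<Rightarrow> nat \<Rightarrow> nat set \<times> nat set \<Rightarrow> nat set set" where
  "r1f k i CD = (case CD of (C, D) \<Rightarrow>
     slotR (F2 (tp (Gs k) C) (tp (Gs i) D)) (emb (A2 (tp (Gs k) C) (tp (Gs i) D)) C) (emb (B2 (tp (Gs k) C) (tp (Gs i) D)) D)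
       (A2 (tp (Gs k) C) (tp (Gs i) D)) (B2 (tp (Gs k) C) (tp (Gs i) D)))"

definition bad1 :: "nat \<Rightarrow> nat \<Rightarrow> nat set \<Rightarrow> nat set \<Rightarrow> nat set set set" where
  "bad1 k i A B = badset P (blocks (Gs k) A \<times> blocks (Gs i) B) (q1 k i) (r1f k i)"

definition q2 :: "nat \<Rightarrow> nat \<Rightarrow> nat set \<Rightarrow> nat set set" where
  "q2 i v D = slotQ (emb {c1 (tp (Gs i) D)} {v}) (emb (B1 (tp (Gs i) D)) D) {c1 (tp (Gs i) D)} (B1 (tp (Gs i) D))"
definition r2f :: "nat \<Rightarrow> nat \<Rightarrow> nat set \<Rightarrow> nat set set" where
  "r2f i v D = slotR (F1 (tp (Gs i) D)) (emb {c1 (tp (Gs i) D)} {v}) (emb (B1 (tp (Gs i) D)) D) {c1 (tp (Gs i) D)} (B1 (tp (Gs i) D))"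

definition groups :: "nat \<Rightarrow> nat set set set" where
  "groups i = (SOME GG. GG \<subseteq> Pow (blocks (Gs i) (X i)) \<and> card GG = l * a + 1 \<and> (\<forall>x\<in>GG. card x = g) \<and>
     (\<forall>x\<in>GG. \<forall>y\<in>GG. x \<noteq> y \<longrightarrow> x \<inter> y = {}) \<and> finite GG)"

lemma groups: assumes "i < l"
  shows "groups i \<subseteq> Pow (blocks (Gs i) (X i)) \<and> card (groups i) = l * a + 1 \<and> (\<forall>x\<in>groups i. card x = g) \<and>
     (\<forall>x\<in>groups i. \<forall>y\<in>groups i. x \<noteq> y \<longrightarrow> x \<inter> y = {}) \<and> finite (groups i)"
proof -
  have fb: "finite (blocks (Gs i) (X i))" using blocks[OF finX[OF assms]] unfolding blockfam_def by blast
  have "(l * a + 1) * g \<le> card (blocks (Gs i) (X i))"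
    using gbig assms blocks_count[OF finX[OF assms]] le_trans by blast
  from groups_exist[OF fb g1 this] show ?thesis unfolding groups_def by (rule someI_ex)
qed

definition bad2 :: "nat \<Rightarrow> nat \<Rightarrow> nat set set \<Rightarrow> nat set set set" where
  "bad2 i v grp = badset P grp (q2 i v) (r2f i v)"

end


context prob
begin

lemma blockfamD:
  assumes "finite S" "D \<in> blocks H S"
  shows "D \<subseteq> S" "card D = r" "homog H (tp H D) D" "finite D"
proof -
  have bf: "blockfam r R H S (blocks H S)" using blocks[OF assms(1)] .
  then have 1: "D \<subseteq> S \<and> card D = r \<and> (\<exists>\<tau>. homog H \<tau> D)" using assms(2) unfolding blockfam_def by blast
  then show "D \<subseteq> S" "card D = r" by auto
  from 1 obtain \<tau> where "homog H \<tau> D" by blast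
  then show "homog H (tp H D) D" by (rule tp)
  show "finite D" using 1 r1 by (metis card.infinite not_one_le_zero)
qed

lemma blocks_disj:
  assumes "finite S" "D \<in> blocks H S" "D' \<in> blocks H S" "D \<noteq> D'"
  shows "D \<inter> D' = {}"
  using blocks[OF assms(1)] assms(2-4) unfolding blockfam_def by blast

lemma blocks_fin: "finite S \<Longrightarrow> finite (blocks H S)"
  using blocks unfolding blockfam_def by blast

lemma cross_P: "k < l \<Longrightarrow> i < l \<Longrightarrow> k \<noteq> i \<Longrightarrow> C \<subseteq> X k \<Longrightarrow> D \<subseteq> X i \<Longrightarrow> cross C D \<subseteq> P"
  unfolding cross_def using cross_in_P by blast

lemma slot1_props:
  assumes ki: "k < l" "i < l" "k \<noteq> i" and AB: "A \<subseteq> X k" "B \<subseteq> X i"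
    and CD: "C \<in> blocks (Gs k) A" "D \<in> blocks (Gs i) B"
  defines "t1 \<equiv> tp (Gs k) C" and "t2 \<equiv> tp (Gs i) D"
  shows "C \<subseteq> A" "D \<subseteq> B" "homog (Gs k) t1 C" "homog (Gs i) t2 D"
    "twopart T (F2 t1 t2) (A2 t1 t2) (B2 t1 t2) t1 t2"
    "inj_on (emb (A2 t1 t2) C) (A2 t1 t2)" "emb (A2 t1 t2) C ` A2 t1 t2 \<subseteq> C"
    "inj_on (emb (B2 t1 t2) D) (B2 t1 t2)" "emb (B2 t1 t2) D ` B2 t1 t2 \<subseteq> D"
    "q1 k i (C, D) \<subseteq> cross C D" "r1f k i (C, D) \<subseteq> q1 k i (C, D)" "card (q1 k i (C, D)) \<le> r * r"
proof -
  have fA: "finite A" using AB(1) finX[OF ki(1)] finite_subset by blast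
  have fB: "finite B" using AB(2) finX[OF ki(2)] finite_subset by blast
  note bC = blockfamD[OF fA CD(1)] and bD = blockfamD[OF fB CD(2)]
  show "C \<subseteq> A" "D \<subseteq> B" using bC bD by auto
  show "homog (Gs k) t1 C" "homog (Gs i) t2 D" unfolding t1_def t2_def using bC bD by auto
  have tpF: "twopart T (F2 t1 t2) (A2 t1 t2) (B2 t1 t2) t1 t2" "card (A2 t1 t2) \<le> r" "card (B2 t1 t2) \<le> r"
    using F2 by auto
  then show "twopart T (F2 t1 t2) (A2 t1 t2) (B2 t1 t2) t1 t2" by simp
  have fU: "finite (A2 t1 t2)" "finite (B2 t1 t2)" using twopart_fin[OF tpF(1)] by auto
  have e1: "inj_on (emb (A2 t1 t2) C) (A2 t1 t2)" "emb (A2 t1 t2) C ` A2 t1 t2 \<subseteq> C"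
    using emb[OF fU(1) bC(4)] tpF(2) bC(2) by auto
  have e2: "inj_on (emb (B2 t1 t2) D) (B2 t1 t2)" "emb (B2 t1 t2) D ` B2 t1 t2 \<subseteq> D"
    using emb[OF fU(2) bD(4)] tpF(3) bD(2) by auto
  show "inj_on (emb (A2 t1 t2) C) (A2 t1 t2)" "emb (A2 t1 t2) C ` A2 t1 t2 \<subseteq> C"
    "inj_on (emb (B2 t1 t2) D) (B2 t1 t2)" "emb (B2 t1 t2) D ` B2 t1 t2 \<subseteq> D" using e1 e2 by auto
  show "q1 k i (C, D) \<subseteq> cross C D"
    using slotQ_sub_cross[OF e1(2) e2(2)] unfolding q1_def t1_def t2_def by simp
  show "r1f k i (C, D) \<subseteq> q1 k i (C, D)" unfolding q1_def r1f_def by (simp add: slotR_sub)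
  have "card (q1 k i (C, D)) \<le> card (A2 t1 t2) * card (B2 t1 t2)"
    using card_slotQ[OF fU] unfolding q1_def t1_def t2_def by simp
  also have "\<dots> \<le> r * r" using tpF(2,3) by (rule mult_le_mono)
  finally show "card (q1 k i (C, D)) \<le> r * r" .
qed

lemma good1_if:
  assumes E: "E \<subseteq> P"
    and nb: "\<forall>k<l. \<forall>i<l. k \<noteq> i \<longrightarrow> (\<forall>A B. A \<subseteq> X k \<longrightarrow> B \<subseteq> X i \<longrightarrow> a \<le> card A \<longrightarrow> a \<le> card B \<longrightarrow> E \<notin> bad1 k i A B)"
  shows "Good1 E"
  unfolding Good1_def
proof (intro allI impI)
  fix k i A B Y
  assume ki: "k < l" "i < l" "k \<noteq> i" and AB: "A \<subseteq> X k" "B \<subseteq> X i" and c: "a \<le> card A" "a \<le> card B"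
    and Y: "A \<union> B \<subseteq> Y"
  have "E \<notin> bad1 k i A B" using nb ki AB c by blast
  then obtain CD where CD: "CD \<in> blocks (Gs k) A \<times> blocks (Gs i) B" "E \<inter> q1 k i CD = r1f k i CD"
    using E unfolding bad1_def badset_def by blast
  obtain C D where CDe: "CD = (C, D)" by (cases CD)
  have C: "C \<in> blocks (Gs k) A" and D: "D \<in> blocks (Gs i) B" using CD(1) CDe by auto
  note sp = slot1_props[OF ki AB C D]
  have good: "E \<inter> slotQ (emb (A2 (tp (Gs k) C) (tp (Gs i) D)) C) (emb (B2 (tp (Gs k) C) (tp (Gs i) D)) D)
       (A2 (tp (Gs k) C) (tp (Gs i) D)) (B2 (tp (Gs k) C) (tp (Gs i) D))
     = slotR (F2 (tp (Gs k) C) (tp (Gs i) D)) (emb (A2 (tp (Gs k) C) (tp (Gs i) D)) C) (emb (B2 (tp (Gs k) C) (tp (Gs i) D)) D)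
       (A2 (tp (Gs k) C) (tp (Gs i) D)) (B2 (tp (Gs k) C) (tp (Gs i) D))"
    using CD(2) unfolding CDe q1_def r1f_def by simp
  have CDY: "C \<union> D \<subseteq> Y" using sp(1,2) Y by blast
  have CX: "C \<subseteq> X k" "D \<subseteq> X i" using sp(1,2) AB by auto
  show "induced (mk E) Y \<notin> T"
    by (rule embed[OF ki CX sp(3) sp(4) sp(5) sp(6) sp(7) sp(8) sp(9) E good CDY])
qed

lemma groupsD: assumes "i < l"
  shows "groups i \<subseteq> Pow (blocks (Gs i) (X i))" "card (groups i) = l * a + 1" "\<forall>x\<in>groups i. card x = g"
     "\<forall>x\<in>groups i. \<forall>y\<in>groups i. x \<noteq> y \<longrightarrow> x \<inter> y = {}" "finite (groups i)"
  using groups[OF assms] by auto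

lemma slot2_props:
  assumes i: "i < l" and v: "v \<in> V - X i" and D: "D \<in> blocks (Gs i) (X i)"
  defines "t \<equiv> tp (Gs i) D"
  shows "\<exists>k<l. k \<noteq> i \<and> v \<in> X k" "homog (Gs i) t D" "D \<subseteq> X i"
    "twopart T (F1 t) {c1 t} (B1 t) False t"
    "inj_on (emb {c1 t} {v}) {c1 t}" "emb {c1 t} {v} ` {c1 t} \<subseteq> {v}"
    "inj_on (emb (B1 t) D) (B1 t)" "emb (B1 t) D ` B1 t \<subseteq> D"
    "q2 i v D \<subseteq> cross {v} D" "r2f i v D \<subseteq> q2 i v D" "card (q2 i v D) \<le> r * r"
proof -
  obtain k where k: "k < l" "v \<in> X k" using in_part v by blast
  have "k \<noteq> i" using k v by blast
  then show "\<exists>k<l. k \<noteq> i \<and> v \<in> X k" using k by blast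
  note bD = blockfamD[OF finX[OF i] D]
  show "homog (Gs i) t D" "D \<subseteq> X i" unfolding t_def using bD by auto
  have tpF: "twopart T (F1 t) {c1 t} (B1 t) False t" "card (B1 t) \<le> r" using F1 by auto
  then show "twopart T (F1 t) {c1 t} (B1 t) False t" by simp
  have fU: "finite (B1 t)" using twopart_fin[OF tpF(1)] by auto
  have e1: "inj_on (emb {c1 t} {v}) {c1 t}" "emb {c1 t} {v} ` {c1 t} \<subseteq> {v}"
    using emb[of "{c1 t}" "{v}"] by auto
  have e2: "inj_on (emb (B1 t) D) (B1 t)" "emb (B1 t) D ` B1 t \<subseteq> D"
    using emb[OF fU bD(4)] tpF(2) bD(2) by auto
  show "inj_on (emb {c1 t} {v}) {c1 t}" "emb {c1 t} {v} ` {c1 t} \<subseteq> {v}"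
    "inj_on (emb (B1 t) D) (B1 t)" "emb (B1 t) D ` B1 t \<subseteq> D" using e1 e2 by auto
  show "q2 i v D \<subseteq> cross {v} D"
    using slotQ_sub_cross[OF e1(2) e2(2)] unfolding q2_def t_def by simp
  show "r2f i v D \<subseteq> q2 i v D" unfolding q2_def r2f_def by (simp add: slotR_sub)
  have "card (q2 i v D) \<le> card {c1 t} * card (B1 t)"
  proof -
    have "finite {c1 t}" by simp
    from card_slotQ[OF this fU] show ?thesis unfolding q2_def t_def by simp
  qed
  also have "\<dots> \<le> r * r" using tpF(2) r1 by (simp add: le_trans[OF _ mult_le_mono1[OF r1]] mult_le_mono2)
  finally show "card (q2 i v D) \<le> r * r" .
qed

lemma good2_if:
  assumes E: "E \<subseteq> P"
    and nb: "\<forall>i<l. \<forall>v\<in>V - X i. \<forall>grp\<in>groups i. E \<notin> bad2 i v grp"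
  shows "Good2 E"
  unfolding Good2_def
proof (intro allI impI ballI)
  fix i v W Y
  assume i: "i < l" and v: "v \<in> V - X i" and W: "W \<subseteq> X i" and cW: "card (X i - W) \<le> l * a"
    and Y: "insert v W \<subseteq> Y"
  note gr = groupsD[OF i]
  have Bl1: "\<forall>D\<in>blocks (Gs i) (X i). \<forall>D'\<in>blocks (Gs i) (X i). D \<noteq> D' \<longrightarrow> D \<inter> D' = {}"
    using blocks_disj[OF finX[OF i]] by blast
  have Bl2: "\<forall>D\<in>blocks (Gs i) (X i). D \<subseteq> X i" using blockfamD(1)[OF finX[OF i]] by blast
  have lt: "card (X i - W) < card (groups i)" using cW gr(2) by simp
  obtain grp where grp: "grp \<in> groups i" "\<forall>D\<in>grp. D \<subseteq> W"
    using some_group_inside[OF Bl1 Bl2 gr(1) gr(4) gr(5) finX[OF i] lt] by blast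
  have "E \<notin> bad2 i v grp" using nb i v grp(1) by blast
  then obtain D where D: "D \<in> grp" "E \<inter> q2 i v D = r2f i v D"
    using E unfolding bad2_def badset_def by blast
  have Db: "D \<in> blocks (Gs i) (X i)" using gr(1) grp(1) D(1) by blast
  note sp = slot2_props[OF i v Db]
  obtain k where k: "k < l" "k \<noteq> i" "v \<in> X k" using sp(1) by blast
  have good: "E \<inter> slotQ (emb {c1 (tp (Gs i) D)} {v}) (emb (B1 (tp (Gs i) D)) D) {c1 (tp (Gs i) D)} (B1 (tp (Gs i) D))
    = slotR (F1 (tp (Gs i) D)) (emb {c1 (tp (Gs i) D)} {v}) (emb (B1 (tp (Gs i) D)) D) {c1 (tp (Gs i) D)} (B1 (tp (Gs i) D))"
    using D(2) unfolding q2_def r2f_def by simp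
  have CDY: "{v} \<union> D \<subseteq> Y" using grp(2) D(1) Y by blast
  have vX: "{v} \<subseteq> X k" using k by simp
  show "induced (mk E) Y \<notin> T"
    by (rule embed[OF k(1) i k(2) vX sp(3) homog_single sp(2) sp(4) sp(5) sp(6) sp(7) sp(8) E good CDY])
qed

end


context prob
begin

lemma rho_bounds: "0 \<le> rho" "rho \<le> 1"
proof -
  have "(1::real) \<le> 2 ^ (r * r)" by simp
  then have "1 / 2 ^ (r * r) \<le> (1::real)" by simp
  then show "0 \<le> rho" unfolding rho_def by simp
  show "rho \<le> 1" unfolding rho_def by simp
qed

lemma bad1_card:
  assumes ki: "k < l" "i < l" "k \<noteq> i" and AB: "A \<subseteq> X k" "B \<subseteq> X i"
    and c: "a \<le> card A" "a \<le> card B"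
  shows "real (card (bad1 k i A B)) \<le> rho ^ (((a - R) div r) * ((a - R) div r)) * 2 ^ card P"
proof -
  let ?BA = "blocks (Gs k) A" and ?BB = "blocks (Gs i) B"
  let ?I = "?BA \<times> ?BB"
  have fA: "finite A" using AB(1) finX[OF ki(1)] finite_subset by blast
  have fB: "finite B" using AB(2) finX[OF ki(2)] finite_subset by blast
  have fI: "finite ?I" using blocks_fin[OF fA] blocks_fin[OF fB] by simp
  have QR: "\<forall>s\<in>?I. q1 k i s \<subseteq> P \<and> r1f k i s \<subseteq> q1 k i s \<and> card (q1 k i s) \<le> r * r"
  proof
    fix s assume s: "s \<in> ?I"
    obtain C D where CD: "s = (C, D)" "C \<in> ?BA" "D \<in> ?BB" using s by (cases s) auto
    note sp = slot1_props[OF ki AB CD(2) CD(3)]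
    have "cross C D \<subseteq> P" using cross_P[OF ki] sp(1,2) AB by blast
    then show "q1 k i s \<subseteq> P \<and> r1f k i s \<subseteq> q1 k i s \<and> card (q1 k i s) \<le> r * r"
      using sp(10,11,12) CD(1) by auto
  qed
  have dj: "\<forall>s\<in>?I. \<forall>t\<in>?I. s \<noteq> t \<longrightarrow> q1 k i s \<inter> q1 k i t = {}"
  proof (intro ballI impI)
    fix s t assume s: "s \<in> ?I" and t: "t \<in> ?I" and st: "s \<noteq> t"
    obtain C D where CD: "s = (C, D)" "C \<in> ?BA" "D \<in> ?BB" using s by (cases s) auto
    obtain C' D' where CD': "t = (C', D')" "C' \<in> ?BA" "D' \<in> ?BB" using t by (cases t) auto
    note sp = slot1_props[OF ki AB CD(2) CD(3)]
    note sp' = slot1_props[OF ki AB CD'(2) CD'(3)]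
    have "C \<noteq> C' \<or> D \<noteq> D'" using st CD(1) CD'(1) by auto
    then have 1: "C \<inter> C' = {} \<or> D \<inter> D' = {}"
      using blocks_disj[OF fA CD(2) CD'(2)] blocks_disj[OF fB CD(3) CD'(3)] by blast
    have "C \<union> C' \<subseteq> X k" "D \<union> D' \<subseteq> X i" using sp(1,2) sp'(1,2) AB by auto
    then have 2: "(C \<union> C') \<inter> (D \<union> D') = {}" using disj ki by blast
    have "cross C D \<inter> cross C' D' = {}" by (rule cross_disj[OF 1 2])
    then show "q1 k i s \<inter> q1 k i t = {}" using sp(10) sp'(10) CD(1) CD'(1) by blast
  qed
  have "real (card (bad1 k i A B)) \<le> (1 - 1 / 2 ^ (r * r)) ^ card ?I * 2 ^ card P"
    unfolding bad1_def by (rule badset_card[OF finP fI QR dj])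
  also have "\<dots> = rho ^ card ?I * 2 ^ card P" unfolding rho_def by simp
  also have "\<dots> \<le> rho ^ (((a - R) div r) * ((a - R) div r)) * 2 ^ card P"
  proof -
    have h1: "(a - R) div r \<le> card ?BA"
      using div_le_mono[of "a - R" "card A - R" r] c(1) blocks_count[OF fA, of "Gs k"] by linarith
    have h2: "(a - R) div r \<le> card ?BB"
      using div_le_mono[of "a - R" "card B - R" r] c(2) blocks_count[OF fB, of "Gs i"] by linarith
    have "((a - R) div r) * ((a - R) div r) \<le> card ?I"
      using mult_le_mono[OF h1 h2] by (simp add: card_cartesian_product)
    then have "rho ^ card ?I \<le> rho ^ (((a - R) div r) * ((a - R) div r))"
      using rho_bounds by (intro power_decreasing) auto
    then show ?thesis by simp
  qed
  finally show ?thesis .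
qed

lemma bad2_card:
  assumes i: "i < l" and v: "v \<in> V - X i" and grp: "grp \<in> groups i"
  shows "real (card (bad2 i v grp)) \<le> rho ^ g * 2 ^ card P"
proof -
  note gr = groupsD[OF i]
  have gsub: "grp \<subseteq> blocks (Gs i) (X i)" using gr(1) grp by blast
  have fI: "finite grp" using blocks_fin[OF finX[OF i]] gsub finite_subset by blast
  obtain k where k: "k < l" "k \<noteq> i" "v \<in> X k" using in_part v by blast
  have QR: "\<forall>s\<in>grp. q2 i v s \<subseteq> P \<and> r2f i v s \<subseteq> q2 i v s \<and> card (q2 i v s) \<le> r * r"
  proof
    fix D assume D: "D \<in> grp"
    then have Db: "D \<in> blocks (Gs i) (X i)" using gsub by blast
    note sp = slot2_props[OF i v Db]
    have "cross {v} D \<subseteq> P" using cross_P[OF k(1) i k(2)] sp(3) k(3) by blast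
    then show "q2 i v D \<subseteq> P \<and> r2f i v D \<subseteq> q2 i v D \<and> card (q2 i v D) \<le> r * r"
      using sp(9,10,11) by auto
  qed
  have dj: "\<forall>s\<in>grp. \<forall>t\<in>grp. s \<noteq> t \<longrightarrow> q2 i v s \<inter> q2 i v t = {}"
  proof (intro ballI impI)
    fix D D' assume D: "D \<in> grp" and D': "D' \<in> grp" and ne: "D \<noteq> D'"
    have Db: "D \<in> blocks (Gs i) (X i)" "D' \<in> blocks (Gs i) (X i)" using gsub D D' by auto
    note sp = slot2_props[OF i v Db(1)] and sp' = slot2_props[OF i v Db(2)]
    have 1: "{v} \<inter> {v} = {} \<or> D \<inter> D' = {}" using blocks_disj[OF finX[OF i] Db ne] by blast
    have 2: "({v} \<union> {v}) \<inter> (D \<union> D') = {}" using sp(3) sp'(3) v by blast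
    have "cross {v} D \<inter> cross {v} D' = {}" by (rule cross_disj[OF 1 2])
    then show "q2 i v D \<inter> q2 i v D' = {}" using sp(9) sp'(9) by blast
  qed
  have "real (card (bad2 i v grp)) \<le> (1 - 1 / 2 ^ (r * r)) ^ card grp * 2 ^ card P"
    unfolding bad2_def by (rule badset_card[OF finP fI QR dj])
  also have "\<dots> = rho ^ g * 2 ^ card P" using gr(3) grp unfolding rho_def by simp
  finally show ?thesis .
qed

definition Ev1 :: "(nat \<times> nat \<times> nat set \<times> nat set) set" where
  "Ev1 = {(k, i, A, B). k < l \<and> i < l \<and> k \<noteq> i \<and> A \<subseteq> X k \<and> B \<subseteq> X i \<and> a \<le> card A \<and> a \<le> card B}"
definition Ev2 :: "(nat \<times> nat \<times> nat set set) set" where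
  "Ev2 = (SIGMA i:{..<l}. (V - X i) \<times> groups i)"
definition b1 :: "nat \<times> nat \<times> nat set \<times> nat set \<Rightarrow> nat set set set" where
  "b1 ev = (case ev of (k, i, A, B) \<Rightarrow> bad1 k i A B)"
definition b2 :: "nat \<times> nat \<times> nat set set \<Rightarrow> nat set set set" where
  "b2 ev = (case ev of (i, v, grp) \<Rightarrow> bad2 i v grp)"

lemma cardV: "card V = n" by (simp add: V_def)

lemma Ev1_card: "finite Ev1" "card Ev1 \<le> l * l * 2 ^ n * 2 ^ n"
proof -
  have sub: "Ev1 \<subseteq> {..<l} \<times> {..<l} \<times> Pow V \<times> Pow V" unfolding Ev1_def using X_sub by auto
  have f: "finite ({..<l} \<times> {..<l} \<times> Pow V \<times> Pow V)" using finV by simp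
  show "finite Ev1" using finite_subset[OF sub f] .
  have "card Ev1 \<le> card ({..<l} \<times> {..<l} \<times> Pow V \<times> Pow V)" using card_mono[OF f sub] .
  also have "\<dots> = l * l * 2 ^ n * 2 ^ n" using finV cardV by (simp add: card_cartesian_product card_Pow)
  finally show "card Ev1 \<le> l * l * 2 ^ n * 2 ^ n" .
qed

lemma Ev2_card: "finite Ev2" "card Ev2 \<le> l * n * (l * a + 1)"
proof -
  have fin: "\<forall>i\<in>{..<l}. finite ((V - X i) \<times> groups i)" using finV groupsD(5) by auto
  show "finite Ev2" unfolding Ev2_def using fin by auto
  have "card Ev2 = (\<Sum>i<l. card ((V - X i) \<times> groups i))" unfolding Ev2_def
    using fin by (simp add: card_SigmaI)
  also have "\<dots> \<le> (\<Sum>i<l. n * (l * a + 1))"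
  proof (rule sum_mono)
    fix i assume i: "i \<in> {..<l}"
    have "card ((V - X i) \<times> groups i) = card (V - X i) * (l * a + 1)"
      using groupsD(2) i by (simp add: card_cartesian_product)
    also have "\<dots> \<le> n * (l * a + 1)"
    proof (rule mult_le_mono1)
      show "card (V - X i) \<le> n" using card_mono[OF finV, of "V - X i"] cardV by auto
    qed
    finally show "card ((V - X i) \<times> groups i) \<le> n * (l * a + 1)" .
  qed
  also have "\<dots> = l * n * (l * a + 1)" by (simp add: algebra_simps)
  finally show "card Ev2 \<le> l * n * (l * a + 1)" .
qed

lemma bad_sub: "{E \<in> Pow P. \<not> unique_Tl_partition T l (mk E) X} \<subseteq> (\<Union>ev\<in>Ev1. b1 ev) \<union> (\<Union>ev\<in>Ev2. b2 ev)"
proof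
  fix E assume E: "E \<in> {E \<in> Pow P. \<not> unique_Tl_partition T l (mk E) X}"
  then have EP: "E \<subseteq> P" and nu: "\<not> unique_Tl_partition T l (mk E) X" by auto
  have "\<not> Good1 E \<or> \<not> Good2 E" using unique_if_good[OF EP] nu by blast
  then show "E \<in> (\<Union>ev\<in>Ev1. b1 ev) \<union> (\<Union>ev\<in>Ev2. b2 ev)"
  proof
    assume "\<not> Good1 E"
    then obtain k i A B where kiAB: "k < l" "i < l" "k \<noteq> i" "A \<subseteq> X k" "B \<subseteq> X i" "a \<le> card A" "a \<le> card B"
      "E \<in> bad1 k i A B" using good1_if[OF EP] by blast
    then have "(k, i, A, B) \<in> Ev1" unfolding Ev1_def by simp
    moreover have "E \<in> b1 (k, i, A, B)" using kiAB(8) unfolding b1_def by simp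
    ultimately show ?thesis by blast
  next
    assume "\<not> Good2 E"
    then obtain i v grp where ivg: "i < l" "v \<in> V - X i" "grp \<in> groups i" "E \<in> bad2 i v grp"
      using good2_if[OF EP] by blast
    then have "(i, v, grp) \<in> Ev2" unfolding Ev2_def by simp
    moreover have "E \<in> b2 (i, v, grp)" using ivg(4) unfolding b2_def by simp
    ultimately show ?thesis by blast
  qed
qed

definition bound :: real where
  "bound = real l * real l * 2 ^ n * 2 ^ n * rho ^ (((a - R) div r) * ((a - R) div r))
     + real l * real n * (real l * real a + 1) * rho ^ g"

lemma bad_card: "real (card {E \<in> Pow P. \<not> unique_Tl_partition T l (mk E) X}) \<le> bound * 2 ^ card P"
proof -
  let ?h = "((a - R) div r) * ((a - R) div r)"
  have fb1: "\<forall>ev\<in>Ev1. finite (b1 ev)" unfolding b1_def bad1_def badset_def using finP by auto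
  have fb2: "\<forall>ev\<in>Ev2. finite (b2 ev)" unfolding b2_def bad2_def badset_def using finP by auto
  have "card {E \<in> Pow P. \<not> unique_Tl_partition T l (mk E) X} \<le> card ((\<Union>ev\<in>Ev1. b1 ev) \<union> (\<Union>ev\<in>Ev2. b2 ev))"
    using bad_sub Ev1_card(1) Ev2_card(1) fb1 fb2 by (intro card_mono) auto
  also have "\<dots> \<le> card (\<Union>ev\<in>Ev1. b1 ev) + card (\<Union>ev\<in>Ev2. b2 ev)" by (rule card_Un_le)
  also have "\<dots> \<le> (\<Sum>ev\<in>Ev1. card (b1 ev)) + (\<Sum>ev\<in>Ev2. card (b2 ev))"
    using card_UN_le[OF Ev1_card(1), of b1] card_UN_le[OF Ev2_card(1), of b2] by linarith
  finally have 0: "card {E \<in> Pow P. \<not> unique_Tl_partition T l (mk E) X}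
     \<le> (\<Sum>ev\<in>Ev1. card (b1 ev)) + (\<Sum>ev\<in>Ev2. card (b2 ev))" .
  have 1: "real (card {E \<in> Pow P. \<not> unique_Tl_partition T l (mk E) X})
     \<le> (\<Sum>ev\<in>Ev1. real (card (b1 ev))) + (\<Sum>ev\<in>Ev2. real (card (b2 ev)))"
  proof -
    from 0 have "real (card {E \<in> Pow P. \<not> unique_Tl_partition T l (mk E) X})
       \<le> real ((\<Sum>ev\<in>Ev1. card (b1 ev)) + (\<Sum>ev\<in>Ev2. card (b2 ev)))" by (simp only: of_nat_le_iff)
    then show ?thesis by (simp add: of_nat_sum)
  qed
  have 2: "(\<Sum>ev\<in>Ev1. real (card (b1 ev))) \<le> real (card Ev1) * (rho ^ ?h * 2 ^ card P)"
  proof (rule sum_bounded_above)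
    fix ev assume "ev \<in> Ev1"
    then obtain k i A B where ev: "ev = (k, i, A, B)" "k < l" "i < l" "k \<noteq> i" "A \<subseteq> X k" "B \<subseteq> X i" "a \<le> card A" "a \<le> card B"
      unfolding Ev1_def by auto
    show "real (card (b1 ev)) \<le> rho ^ ?h * 2 ^ card P"
      using bad1_card[OF ev(2-8)] ev(1) unfolding b1_def by simp
  qed
  have 3: "(\<Sum>ev\<in>Ev2. real (card (b2 ev))) \<le> real (card Ev2) * (rho ^ g * 2 ^ card P)"
  proof (rule sum_bounded_above)
    fix ev assume "ev \<in> Ev2"
    then obtain i v grp where ev: "ev = (i, v, grp)" "i < l" "v \<in> V - X i" "grp \<in> groups i"
      unfolding Ev2_def by auto
    show "real (card (b2 ev)) \<le> rho ^ g * 2 ^ card P"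
      using bad2_card[OF ev(2-4)] ev(1) unfolding b2_def by simp
  qed
  have 4: "real (card Ev1) * (rho ^ ?h * 2 ^ card P) \<le> real l * real l * 2 ^ n * 2 ^ n * (rho ^ ?h * 2 ^ card P)"
  proof (rule mult_right_mono)
    have "real (card Ev1) \<le> real (l * l * 2 ^ n * 2 ^ n)" using Ev1_card(2) by (simp only: of_nat_le_iff)
    then show "real (card Ev1) \<le> real l * real l * 2 ^ n * 2 ^ n" by simp
    show "0 \<le> rho ^ ?h * 2 ^ card P" using rho_bounds by simp
  qed
  have 5: "real (card Ev2) * (rho ^ g * 2 ^ card P) \<le> real l * real n * (real l * real a + 1) * (rho ^ g * 2 ^ card P)"
  proof (rule mult_right_mono)
    have "real (card Ev2) \<le> real (l * n * (l * a + 1))" using Ev2_card(2) by (simp only: of_nat_le_iff)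
    then show "real (card Ev2) \<le> real l * real n * (real l * real a + 1)" by (simp add: algebra_simps)
    show "0 \<le> rho ^ g * 2 ^ card P" using rho_bounds by simp
  qed
  have 6: "bound * 2 ^ card P = real l * real l * 2 ^ n * 2 ^ n * (rho ^ ?h * 2 ^ card P)
     + real l * real n * (real l * real a + 1) * (rho ^ g * 2 ^ card P)"
    unfolding bound_def by (simp add: algebra_simps)
  show ?thesis using 1 2 3 4 5 6 by linarith
qed

lemma final_count:
  "real (card {G \<in> extensions l Gs. unique_Tl_partition T l G X}) \<ge> (1 - bound) * real (card (extensions l Gs))"
proof -
  let ?U = "{E \<in> Pow P. unique_Tl_partition T l (mk E) X}"
  let ?N = "{E \<in> Pow P. \<not> unique_Tl_partition T l (mk E) X}"
  have fP: "finite (Pow P)" using finP by simp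
  have "Pow P = ?U \<union> ?N" by auto
  moreover have "?U \<inter> ?N = {}" by auto
  ultimately have eqn: "card (Pow P) = card ?U + card ?N"
    using fP by (metis (no_types, lifting) card_Un_disjoint finite_Un)
  then have "real (card (Pow P)) = real (card ?U + card ?N)" by (simp only:)
  then have "real (card (Pow P)) = real (card ?U) + real (card ?N)" by (simp only: of_nat_add)
  moreover have "real (card (Pow P)) = 2 ^ card P" using finP by (simp add: card_Pow)
  ultimately have "real (card ?U) = 2 ^ card P - real (card ?N)" by linarith
  also have "\<dots> \<ge> 2 ^ card P - bound * 2 ^ card P" using bad_card by simp
  finally have "real (card ?U) \<ge> (1 - bound) * 2 ^ card P" by (simp add: algebra_simps)
  then show ?thesis using card_ext_filter[of "\<lambda>G. unique_Tl_partition T l G X"] card_ext by simp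
qed

end


lemma div_lb: assumes m: "0 < m" shows "real q / real m - 1 \<le> real (q div m)"
proof -
  have "q = q div m * m + q mod m" by simp
  moreover have "q mod m < m" using m by simp
  ultimately have "q < q div m * m + m" by linarith
  then have "real q < real (q div m) * real m + real m" by (metis of_nat_add of_nat_less_iff of_nat_mult)
  then have "real q / real m < real (q div m) + 1" using m by (simp add: field_simps)
  then show ?thesis by simp
qed

lemma pow_exp: assumes "0 < rho" shows "rho ^ k = exp (real k * ln rho)"
  using assms by (simp add: exp_of_nat_mult)

lemma pow_le_exp: assumes "0 < rho" "rho < 1" "y \<le> real k" shows "rho ^ k \<le> exp (- (- ln rho) * y)"
proof -
  have "ln rho < 0" using assms by simp
  then have "real k * ln rho \<le> y * ln rho" using assms(3) by (simp add: mult_right_mono_neg)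
  then have "exp (real k * ln rho) \<le> exp (y * ln rho)" by simp
  then show ?thesis using pow_exp[OF assms(1), of k] by (simp add: mult.commute)
qed

definition aN :: "nat \<Rightarrow> nat" where "aN n = nat \<lceil>real n powr (2/3)\<rceil>"
definition mN :: "nat \<Rightarrow> nat \<Rightarrow> nat" where "mN L n = nat \<lfloor>real n / (2 * real L)\<rfloor>"
definition gN :: "nat \<Rightarrow> nat \<Rightarrow> nat \<Rightarrow> nat \<Rightarrow> nat" where
  "gN L r R n = ((mN L n - R) div r) div (L * aN n + 1)"

lemma params_from_real:
  fixes L r R n :: nat and rho eta :: real
  assumes L: "L > 0" and r: "r \<ge> 1" and rho: "0 < rho" "rho < 1"
    and x1: "real n \<ge> 1"
    and c2: "real L * (real n powr (2/3) + 1) + 1 \<le> real n / (2 * real L)"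
    and c3: "1 \<le> ((real n / (2 * real L) - 1 - real R) / real r - 1) / (real L * (real n powr (2/3) + 1) + 1) - 1"
    and c4: "0 \<le> (real n powr (2/3) - real R) / real r - 1"
    and c5: "real L * real L * exp (real n * ln 4 - (- ln rho) * ((real n powr (2/3) - real R) / real r - 1)^2)
        + real L * real n * (real L * (real n powr (2/3) + 1) + 1) *
          exp (- (- ln rho) * (((real n / (2 * real L) - 1 - real R) / real r - 1) / (real L * (real n powr (2/3) + 1) + 1) - 1))
        < eta"
  shows "1 \<le> aN n" "L * aN n \<le> mN L n" "1 \<le> gN L r R n"
    "real L * real L * 2 ^ n * 2 ^ n * rho ^ (((aN n - R) div r) * ((aN n - R) div r))
       + real L * real n * (real L * real (aN n) + 1) * rho ^ gN L r R n \<le> eta"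
proof -
  define x where "x = real n"
  define p where "p = x powr (2/3)"
  have p0: "0 < p" using x1 unfolding p_def x_def by simp
  have aup: "real (aN n) \<le> p + 1" and alo: "p \<le> real (aN n)"
    using ceiling_correct[of p] p0 unfolding aN_def p_def x_def by auto
  show a1: "1 \<le> aN n"
  proof -
    have "0 < real (aN n)" using p0 alo by linarith
    then show ?thesis by simp
  qed
  have mup: "real (mN L n) \<le> x / (2 * real L)" and mlo: "x / (2 * real L) - 1 \<le> real (mN L n)"
  proof -
    have nn: "0 \<le> x / (2 * real L)" unfolding x_def by simp
    have "real (mN L n) = of_int \<lfloor>x / (2 * real L)\<rfloor>" unfolding mN_def x_def using nn by simp
    then show "real (mN L n) \<le> x / (2 * real L)" "x / (2 * real L) - 1 \<le> real (mN L n)"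
      by linarith+
  qed
  have "real (L * aN n) \<le> real L * (p + 1)" using aup by (simp add: mult_left_mono)
  also have "\<dots> \<le> x / (2 * real L) - 1" using c2 unfolding p_def x_def by linarith
  also have "\<dots> \<le> real (mN L n)" using mlo .
  finally have "real (L * aN n) \<le> real (mN L n)" .
  then show la: "L * aN n \<le> mN L n" by (simp only: of_nat_le_iff)
  define q where "q = (mN L n - R) div r"
  define Mx where "Mx = real L * (p + 1) + 1"
  define Nx where "Nx = (x / (2 * real L) - 1 - real R) / real r - 1"
  have Mpos: "0 < real (L * aN n + 1)" by (rule of_nat_0_less_iff[THEN iffD2]) simp
  have MMx: "real (L * aN n + 1) \<le> Mx" unfolding Mx_def using aup by (simp add: mult_left_mono)
  have qlo: "Nx \<le> real q"
  proof -
    have "real (mN L n) - real R \<le> real (mN L n - R)" by simp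
    then have "(x / (2 * real L) - 1 - real R) / real r \<le> real (mN L n - R) / real r"
      using mlo r by (intro divide_right_mono) auto
    then show ?thesis using div_lb[of r "mN L n - R"] r unfolding Nx_def q_def by simp
  qed
  have gx: "1 \<le> Nx / Mx - 1" using c3 unfolding Nx_def Mx_def p_def x_def .
  have Mx0: "0 < Mx"
  proof -
    have "0 \<le> real L * (p + 1)" using p0 by simp
    then show ?thesis unfolding Mx_def by linarith
  qed
  have Nx0: "0 \<le> Nx" using gx Mx0 by (smt (verit) divide_nonpos_pos)
  have "Nx / Mx \<le> Nx / real (L * aN n + 1)" using Nx0 Mpos MMx by (intro divide_left_mono) auto
  also have "\<dots> \<le> real q / real (L * aN n + 1)" using qlo Mpos by (intro divide_right_mono) auto
  finally have gg: "Nx / Mx - 1 \<le> real (gN L r R n)"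
    using div_lb[of "L * aN n + 1" q] unfolding gN_def q_def[symmetric] by simp
  show "1 \<le> gN L r R n" using gx gg by linarith
  define hx where "hx = (p - real R) / real r - 1"
  have hx0: "0 \<le> hx" using c4 unfolding hx_def p_def x_def .
  have hlo: "hx \<le> real ((aN n - R) div r)"
  proof -
    have "real (aN n) - real R \<le> real (aN n - R)" by simp
    then have "(p - real R) / real r \<le> real (aN n - R) / real r"
      using alo r by (intro divide_right_mono) auto
    then show ?thesis using div_lb[of r "aN n - R"] r unfolding hx_def by simp
  qed
  have hh: "hx ^ 2 \<le> real (((aN n - R) div r) * ((aN n - R) div r))"
    using hlo hx0 by (simp add: power2_eq_square mult_mono)
  have b1: "rho ^ (((aN n - R) div r) * ((aN n - R) div r)) \<le> exp (- (- ln rho) * hx ^ 2)"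
    using pow_le_exp[OF rho hh] .
  have b2: "rho ^ gN L r R n \<le> exp (- (- ln rho) * (Nx / Mx - 1))"
    using pow_le_exp[OF rho gg] .
  have four: "(2::real) ^ n * 2 ^ n = exp (x * ln 4)"
  proof -
    have "(2::real) ^ n * 2 ^ n = 4 ^ n" by (simp add: power_mult_distrib[symmetric])
    also have "\<dots> = exp (x * ln 4)" unfolding x_def using pow_exp[of 4 n] by simp
    finally show ?thesis .
  qed
  have t1: "real L * real L * 2 ^ n * 2 ^ n * rho ^ (((aN n - R) div r) * ((aN n - R) div r))
      \<le> real L * real L * exp (x * ln 4 - (- ln rho) * hx ^ 2)"
  proof -
    have "real L * real L * 2 ^ n * 2 ^ n * rho ^ (((aN n - R) div r) * ((aN n - R) div r))
       = real L * real L * exp (x * ln 4) * rho ^ (((aN n - R) div r) * ((aN n - R) div r))"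
      using four by (simp add: mult.assoc)
    also have "\<dots> \<le> real L * real L * exp (x * ln 4) * exp (- (- ln rho) * hx ^ 2)"
      using b1 by (intro mult_left_mono) auto
    also have "\<dots> = real L * real L * exp (x * ln 4 - (- ln rho) * hx ^ 2)"
    proof -
      have "exp (x * ln 4) * exp (- (- ln rho) * hx ^ 2) = exp (x * ln 4 - (- ln rho) * hx ^ 2)"
        by (simp add: exp_add[symmetric])
      then show ?thesis by (simp add: mult.assoc)
    qed
    finally show ?thesis .
  qed
  have t2: "real L * real n * (real L * real (aN n) + 1) * rho ^ gN L r R n
      \<le> real L * x * Mx * exp (- (- ln rho) * (Nx / Mx - 1))"
  proof -
    have "real L * real (aN n) + 1 \<le> Mx" using MMx by simp
    then have A: "real L * real n * (real L * real (aN n) + 1) \<le> real L * x * Mx"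
      unfolding x_def by (intro mult_left_mono) auto
    have C: "0 \<le> rho ^ gN L r R n" using rho by simp
    have "0 \<le> real L * x" unfolding x_def by simp
    then have D: "0 \<le> real L * x * Mx" using Mx0 by simp
    show ?thesis by (rule mult_mono[OF A b2 D C])
  qed
  have "real L * real L * exp (x * ln 4 - (- ln rho) * hx ^ 2) + real L * x * Mx * exp (- (- ln rho) * (Nx / Mx - 1)) < eta"
    using c5 unfolding x_def hx_def Mx_def Nx_def p_def .
  then show "real L * real L * 2 ^ n * 2 ^ n * rho ^ (((aN n - R) div r) * ((aN n - R) div r))
       + real L * real n * (real L * real (aN n) + 1) * rho ^ gN L r R n \<le> eta"
    using t1 t2 by linarith
qed


lemma RA1: assumes "e > 0" "L > 0" shows "eventually (\<lambda>x::real. x powr (1-e) \<le> x / (2*L)) at_top"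
  using assms by real_asymp
lemma RA2: assumes "L > 0" shows "eventually (\<lambda>x::real. L*(x powr (2/3) + 1) + 1 \<le> x / (2*L)) at_top"
  using assms by real_asymp
lemma RA3: assumes "L > 0" "r > 0"
  shows "eventually (\<lambda>x::real. 1 \<le> ((x/(2*L) - 1 - R)/r - 1)/(L*(x powr (2/3)+1)+1) - 1) at_top"
  using assms by real_asymp
lemma RA4: assumes "r > 0" shows "eventually (\<lambda>x::real. 0 \<le> (x powr (2/3) - R)/r - 1) at_top"
  using assms by real_asymp
lemma RA5: assumes "L > 0" "r > 0" "lam > 0"
  shows "((\<lambda>x::real. L*L*exp(x * ln 4 - lam * ((x powr (2/3) - R)/r - 1)^2)
     + L*x*(L*(x powr (2/3)+1)+1)*exp(-lam*(((x/(2*L) - 1 - R)/r - 1)/(L*(x powr (2/3)+1)+1) - 1))) \<longlongrightarrow> 0) at_top"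
  using assms by real_asymp

lemma asymp_params:
  fixes L r R :: nat and e rho eta :: real
  assumes L: "L > 0" and e: "e > 0" and r: "r \<ge> 1" and rho: "0 < rho" "rho < 1" and eta: "eta > 0"
  shows "\<exists>n0. \<forall>n\<ge>n0. real n powr (1 - e) \<le> real n / (2 * real L) \<and> 1 \<le> aN n \<and> L * aN n \<le> mN L n \<and>
    1 \<le> gN L r R n \<and>
    real L * real L * 2 ^ n * 2 ^ n * rho ^ (((aN n - R) div r) * ((aN n - R) div r))
       + real L * real n * (real L * real (aN n) + 1) * rho ^ gN L r R n \<le> eta"
proof -
  define lam where "lam = - ln rho"
  have lam: "lam > 0" unfolding lam_def using rho by simp
  have L': "real L > 0" using L by simp
  have r': "real r > 0" using r by simp
  define Q where "Q x \<longleftrightarrow> 1 \<le> x \<and> x powr (1-e) \<le> x / (2 * real L) \<and>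
      real L * (x powr (2/3) + 1) + 1 \<le> x / (2 * real L) \<and>
      1 \<le> ((x / (2 * real L) - 1 - real R) / real r - 1) / (real L * (x powr (2/3) + 1) + 1) - 1 \<and>
      0 \<le> (x powr (2/3) - real R) / real r - 1 \<and>
      real L * real L * exp (x * ln 4 - lam * ((x powr (2/3) - real R) / real r - 1)^2)
        + real L * x * (real L * (x powr (2/3) + 1) + 1) *
          exp (- lam * (((x / (2 * real L) - 1 - real R) / real r - 1) / (real L * (x powr (2/3) + 1) + 1) - 1))
        < eta" for x
  have ev5: "eventually (\<lambda>x. real L * real L * exp (x * ln 4 - lam * ((x powr (2/3) - real R) / real r - 1)^2)
        + real L * x * (real L * (x powr (2/3) + 1) + 1) *
          exp (- lam * (((x / (2 * real L) - 1 - real R) / real r - 1) / (real L * (x powr (2/3) + 1) + 1) - 1))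
        < eta) at_top"
    using order_tendstoD(2)[OF RA5[OF L' r' lam, of R] eta] .
  have ev0: "eventually (\<lambda>x::real. 1 \<le> x) at_top" by (rule eventually_ge_at_top)
  have "eventually Q at_top"
    unfolding Q_def using ev0 RA1[OF e L'] RA2[OF L'] RA3[OF L' r', of R] RA4[OF r', of R] ev5
    by (intro eventually_conj) auto
  then have "eventually (\<lambda>n. Q (real n)) sequentially"
    by (rule eventually_compose_filterlim[OF _ filterlim_real_sequentially])
  then obtain N where N: "\<And>n. n \<ge> N \<Longrightarrow> Q (real n)" unfolding eventually_sequentially by blast
  show ?thesis
  proof (intro exI[of _ N] allI impI)
    fix n assume n: "N \<le> n"
    then have q: "Q (real n)" by (rule N)
    then have q1: "1 \<le> real n" and q2: "real n powr (1-e) \<le> real n / (2 * real L)"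
      and q3: "real L * (real n powr (2/3) + 1) + 1 \<le> real n / (2 * real L)"
      and q4: "1 \<le> ((real n / (2 * real L) - 1 - real R) / real r - 1) / (real L * (real n powr (2/3) + 1) + 1) - 1"
      and q5: "0 \<le> (real n powr (2/3) - real R) / real r - 1"
      and q6: "real L * real L * exp (real n * ln 4 - (- ln rho) * ((real n powr (2/3) - real R) / real r - 1)^2)
        + real L * real n * (real L * (real n powr (2/3) + 1) + 1) *
          exp (- (- ln rho) * (((real n / (2 * real L) - 1 - real R) / real r - 1) / (real L * (real n powr (2/3) + 1) + 1) - 1))
        < eta"
      unfolding Q_def lam_def by auto
    note pf = params_from_real[OF L r rho q1 q3 q4 q5 q6]
    show "real n powr (1 - e) \<le> real n / (2 * real L) \<and> 1 \<le> aN n \<and> L * aN n \<le> mN L n \<and>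
      1 \<le> gN L r R n \<and>
      real L * real L * 2 ^ n * 2 ^ n * rho ^ (((aN n - R) div r) * ((aN n - R) div r))
       + real L * real n * (real L * real (aN n) + 1) * rho ^ gN L r R n \<le> eta"
      using q2 pf by blast
  qed
qed

lemma constants:
  assumes "meager T" "G0 \<in> T"
  shows "\<exists>r R F2 A2 B2 F1 c1 B1. r \<ge> 1 \<and>
    (\<forall>(H::graph) S. finite S \<longrightarrow> R \<le> card S \<longrightarrow> (\<exists>D\<subseteq>S. card D = r \<and> (\<exists>\<tau>. homog H \<tau> D))) \<and>
    (\<forall>t1 t2. twopart T (F2 t1 t2) (A2 t1 t2) (B2 t1 t2) t1 t2 \<and> card (A2 t1 t2) \<le> r \<and> card (B2 t1 t2) \<le> r) \<and>
    (\<forall>t. twopart T (F1 t) {c1 t} (B1 t) False t \<and> card (B1 t) \<le> r)"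
proof -
  have thin: "thin T" using assms(1) unfolding meager_def by blast
  define X2 where "X2 t1 t2 = (SOME x. twopart T (fst x) (fst (snd x)) (snd (snd x)) t1 t2)" for t1 t2
  have X2: "twopart T (fst (X2 t1 t2)) (fst (snd (X2 t1 t2))) (snd (snd (X2 t1 t2))) t1 t2" for t1 t2
  proof -
    obtain F U1 U2 where "twopart T F U1 U2 t1 t2" using forb2[OF thin] by blast
    then have "\<exists>x. twopart T (fst x) (fst (snd x)) (snd (snd x)) t1 t2" by (intro exI[of _ "(F, U1, U2)"]) simp
    then show ?thesis unfolding X2_def by (rule someI_ex)
  qed
  define X1 where "X1 t = (SOME x. twopart T (fst x) {fst (snd x)} (snd (snd x)) False t)" for t
  have X1: "twopart T (fst (X1 t)) {fst (snd (X1 t))} (snd (snd (X1 t))) False t" for t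
  proof -
    obtain F c U where "twopart T F {c} U False t" using forb1[OF assms] by blast
    then have "\<exists>x. twopart T (fst x) {fst (snd x)} (snd (snd x)) False t" by (intro exI[of _ "(F, c, U)"]) simp
    then show ?thesis unfolding X1_def by (rule someI_ex)
  qed
  define A2 where "A2 t1 t2 = fst (snd (X2 t1 t2))" for t1 t2
  define B2 where "B2 t1 t2 = snd (snd (X2 t1 t2))" for t1 t2
  define B1 where "B1 t = snd (snd (X1 t))" for t
  define S2 where "S2 t1 t2 = card (A2 t1 t2) + card (B2 t1 t2)" for t1 t2
  define r where "r = 1 + S2 True True + S2 True False + S2 False True + S2 False False + card (B1 True) + card (B1 False)"
  have r1: "r \<ge> 1" unfolding r_def by simp
  have rA: "card (A2 t1 t2) \<le> r \<and> card (B2 t1 t2) \<le> r" for t1 t2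
    unfolding r_def S2_def by (cases t1; cases t2) simp_all
  have rB: "card (B1 t) \<le> r" for t unfolding r_def by (cases t) simp_all
  obtain R where R: "\<forall>(H::graph) S. finite S \<longrightarrow> R \<le> card S \<longrightarrow> (\<exists>D\<subseteq>S. card D = r \<and> (\<exists>\<tau>. homog H \<tau> D))"
    using ramsey_homog[of r] by blast
  have c2: "\<forall>t1 t2. twopart T (fst (X2 t1 t2)) (A2 t1 t2) (B2 t1 t2) t1 t2 \<and> card (A2 t1 t2) \<le> r \<and> card (B2 t1 t2) \<le> r"
    using X2 rA unfolding A2_def B2_def by simp
  have c1: "\<forall>t. twopart T (fst (X1 t)) {fst (snd (X1 t))} (B1 t) False t \<and> card (B1 t) \<le> r"
    using X1 rB unfolding B1_def by simp
  show ?thesis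
    apply (rule exI[of _ r], rule exI[of _ R], rule exI[of _ "\<lambda>t1 t2. fst (X2 t1 t2)"], rule exI[of _ A2],
        rule exI[of _ B2], rule exI[of _ "\<lambda>t. fst (X1 t)"], rule exI[of _ "\<lambda>t. fst (snd (X1 t))"], rule exI[of _ B1])
    apply (intro conjI)
       apply (fact r1)
      apply (fact R)
    using c2 apply simp
    using c1 apply simp
    done
qed

lemma main_inst:
  fixes T :: "graph set" and l n :: nat and Gs :: "nat \<Rightarrow> graph" and a r R g :: nat
    and F2 :: "bool \<Rightarrow> bool \<Rightarrow> graph" and A2 B2 :: "bool \<Rightarrow> bool \<Rightarrow> nat set"
    and F1 :: "bool \<Rightarrow> graph" and c1 :: "bool \<Rightarrow> nat" and B1 :: "bool \<Rightarrow> nat set"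
  assumes "hereditary T"
    and "\<forall>i<l. wf_graph (Gs i) \<and> Gs i \<in> T"
    and "\<forall>i<l. \<forall>j<l. i \<noteq> j \<longrightarrow> verts (Gs i) \<inter> verts (Gs j) = {}"
    and "(\<Union>i<l. verts (Gs i)) = {1..n}"
    and "a \<ge> 1" and "\<forall>k<l. l * a \<le> card (verts (Gs k))"
    and "r \<ge> 1"
    and "\<forall>(H::graph) S. finite S \<longrightarrow> R \<le> card S \<longrightarrow> (\<exists>D\<subseteq>S. card D = r \<and> (\<exists>\<tau>. homog H \<tau> D))"
    and "\<forall>t1 t2. twopart T (F2 t1 t2) (A2 t1 t2) (B2 t1 t2) t1 t2 \<and> card (A2 t1 t2) \<le> r \<and> card (B2 t1 t2) \<le> r"
    and "\<forall>t. twopart T (F1 t) {c1 t} (B1 t) False t \<and> card (B1 t) \<le> r"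
    and "g \<ge> 1"
    and "\<forall>i<l. (l * a + 1) * g \<le> (card (verts (Gs i)) - R) div r"
  shows "real (card {G \<in> extensions l Gs. unique_Tl_partition T l G (\<lambda>i. verts (Gs i))})
     \<ge> (1 - (real l * real l * 2 ^ n * 2 ^ n * (1 - 1 / 2 ^ (r * r)) ^ (((a - R) div r) * ((a - R) div r))
     + real l * real n * (real l * real a + 1) * (1 - 1 / 2 ^ (r * r)) ^ g)) * real (card (extensions l Gs))"
proof -
  interpret prob T l n Gs a r R F2 A2 B2 F1 c1 B1 g
    by unfold_locales (fact assms)+
  show ?thesis using final_count unfolding bound_def rho_def .
qed


lemma mN_le: "real (mN L n) \<le> real n / (2 * real L)"
proof -
  have nn: "0 \<le> real n / (2 * real L)" by simp
  have "real (mN L n) = of_int \<lfloor>real n / (2 * real L)\<rfloor>" unfolding mN_def using nn by simp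
  then show ?thesis by linarith
qed

theorem lemma2p12:
  fixes T :: "graph set" and l :: nat and \<epsilon> :: real
  assumes "meager T" and "l > 0" and "\<epsilon> > 0"
  shows "\<forall>\<eta>::real. \<eta> > 0 \<longrightarrow> (\<exists>n0::nat. \<forall>n\<ge>n0. \<forall>Gs :: nat \<Rightarrow> graph.
     (\<forall>i<l. wf_graph (Gs i) \<and> Gs i \<in> T) \<longrightarrow>
     (\<forall>i<l. \<forall>j<l. i \<noteq> j \<longrightarrow> verts (Gs i) \<inter> verts (Gs j) = {}) \<longrightarrow>
     (\<Union>i<l. verts (Gs i)) = {1..n} \<longrightarrow>
     eps_balanced \<epsilon> n l (\<lambda>i. verts (Gs i)) \<longrightarrow>
     real (card {G \<in> extensions l Gs. unique_Tl_partition T l G (\<lambda>i. verts (Gs i))})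
       \<ge> (1 - \<eta>) * real (card (extensions l Gs)))"
proof (intro allI impI)
  fix \<eta> :: real assume \<eta>: "\<eta> > 0"
  have hT: "hereditary T" using assms(1) unfolding meager_def thin_def by blast
  show "\<exists>n0::nat. \<forall>n\<ge>n0. \<forall>Gs :: nat \<Rightarrow> graph.
     (\<forall>i<l. wf_graph (Gs i) \<and> Gs i \<in> T) \<longrightarrow>
     (\<forall>i<l. \<forall>j<l. i \<noteq> j \<longrightarrow> verts (Gs i) \<inter> verts (Gs j) = {}) \<longrightarrow>
     (\<Union>i<l. verts (Gs i)) = {1..n} \<longrightarrow>
     eps_balanced \<epsilon> n l (\<lambda>i. verts (Gs i)) \<longrightarrow>
     real (card {G \<in> extensions l Gs. unique_Tl_partition T l G (\<lambda>i. verts (Gs i))})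
       \<ge> (1 - \<eta>) * real (card (extensions l Gs))"
  proof (cases "T = {}")
    case True
    show ?thesis
    proof (intro exI[of _ 0] allI impI)
      fix n :: nat and Gs :: "nat \<Rightarrow> graph"
      assume h1: "\<forall>i<l. wf_graph (Gs i) \<and> Gs i \<in> T"
      then have "Gs 0 \<in> T" using assms(2) by blast
      then show "real (card {G \<in> extensions l Gs. unique_Tl_partition T l G (\<lambda>i. verts (Gs i))})
       \<ge> (1 - \<eta>) * real (card (extensions l Gs))" using True by simp
    qed
  next
    case False
    then obtain G0 where G0: "G0 \<in> T" by blast
    from constants[OF assms(1) G0] obtain r R F2 A2 B2 F1 c1 B1 where C: "r \<ge> 1 \<and>
    (\<forall>(H::graph) S. finite S \<longrightarrow> R \<le> card S \<longrightarrow> (\<exists>D\<subseteq>S. card D = r \<and> (\<exists>\<tau>. homog H \<tau> D))) \<and>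
    (\<forall>t1 t2. twopart T (F2 t1 t2) (A2 t1 t2) (B2 t1 t2) t1 t2 \<and> card (A2 t1 t2) \<le> r \<and> card (B2 t1 t2) \<le> r) \<and>
    (\<forall>t. twopart T (F1 t) {c1 t} (B1 t) False t \<and> card (B1 t) \<le> r)"
      apply (elim exE) apply (erule that) done
    have r1: "r \<ge> 1" using C[THEN conjunct1] .
    have ram: "\<forall>(H::graph) S. finite S \<longrightarrow> R \<le> card S \<longrightarrow> (\<exists>D\<subseteq>S. card D = r \<and> (\<exists>\<tau>. homog H \<tau> D))"
      using C[THEN conjunct2, THEN conjunct1] .
    have F2: "\<forall>t1 t2. twopart T (F2 t1 t2) (A2 t1 t2) (B2 t1 t2) t1 t2 \<and> card (A2 t1 t2) \<le> r \<and> card (B2 t1 t2) \<le> r"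
      using C[THEN conjunct2, THEN conjunct2, THEN conjunct1] .
    have F1: "\<forall>t. twopart T (F1 t) {c1 t} (B1 t) False t \<and> card (B1 t) \<le> r"
      using C[THEN conjunct2, THEN conjunct2, THEN conjunct2] .
    define rho :: real where "rho = 1 - 1 / 2 ^ (r * r)"
    have p1: "(1::real) < 2 ^ (r * r)"
    proof -
      have "1 \<le> r * r" using r1 by simp
      then show ?thesis by (simp add: one_less_power)
    qed
    have rho0: "0 < rho" unfolding rho_def using p1 by (simp add: field_simps)
    have rho1: "rho < 1" unfolding rho_def by simp
    obtain n0 where n0: "\<forall>n\<ge>n0. real n powr (1 - \<epsilon>) \<le> real n / (2 * real l) \<and> 1 \<le> aN n \<and> l * aN n \<le> mN l n \<and>
      1 \<le> gN l r R n \<and>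
      real l * real l * 2 ^ n * 2 ^ n * rho ^ (((aN n - R) div r) * ((aN n - R) div r))
       + real l * real n * (real l * real (aN n) + 1) * rho ^ gN l r R n \<le> \<eta>"
      using asymp_params[OF assms(2) assms(3) r1 rho0 rho1 \<eta>, of R] by blast
    show ?thesis
    proof (intro exI[of _ n0] allI impI)
      fix n :: nat and Gs :: "nat \<Rightarrow> graph"
      assume n: "n0 \<le> n" and h1: "\<forall>i<l. wf_graph (Gs i) \<and> Gs i \<in> T"
        and h2: "\<forall>i<l. \<forall>j<l. i \<noteq> j \<longrightarrow> verts (Gs i) \<inter> verts (Gs j) = {}"
        and h3: "(\<Union>i<l. verts (Gs i)) = {1..n}"
        and h4: "eps_balanced \<epsilon> n l (\<lambda>i. verts (Gs i))"
      have c: "real n powr (1 - \<epsilon>) \<le> real n / (2 * real l)" "1 \<le> aN n" "l * aN n \<le> mN l n"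
        "1 \<le> gN l r R n"
        "real l * real l * 2 ^ n * 2 ^ n * rho ^ (((aN n - R) div r) * ((aN n - R) div r))
          + real l * real n * (real l * real (aN n) + 1) * rho ^ gN l r R n \<le> \<eta>"
        using n0 n by auto
      have cardX: "mN l n \<le> card (verts (Gs k))" if k: "k < l" for k
      proof -
        have "\<bar>real (card (verts (Gs k))) - real n / real l\<bar> \<le> real n powr (1 - \<epsilon>)"
          using h4 k unfolding eps_balanced_def by blast
        then have "real n / real l - real n powr (1 - \<epsilon>) \<le> real (card (verts (Gs k)))" by linarith
        moreover have "real n / real l - real n / (2 * real l) = real n / (2 * real l)"
          using assms(2) by (simp add: field_simps)
        ultimately have "real n / (2 * real l) \<le> real (card (verts (Gs k)))" using c(1) by linarith
        then have "real (mN l n) \<le> real (card (verts (Gs k)))" using mN_le[of l n] by linarith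
        then show ?thesis by (simp only: of_nat_le_iff)
      qed
      have big: "\<forall>k<l. l * aN n \<le> card (verts (Gs k))" using cardX c(3) le_trans by blast
      have gbig: "\<forall>i<l. (l * aN n + 1) * gN l r R n \<le> (card (verts (Gs i)) - R) div r"
      proof (intro allI impI)
        fix i assume i: "i < l"
        have "(l * aN n + 1) * gN l r R n \<le> (mN l n - R) div r"
          unfolding gN_def by (rule times_div_less_eq_dividend)
        also have "\<dots> \<le> (card (verts (Gs i)) - R) div r"
          using cardX[OF i] by (intro div_le_mono diff_le_mono)
        finally show "(l * aN n + 1) * gN l r R n \<le> (card (verts (Gs i)) - R) div r" .
      qed
      have M: "real (card {G \<in> extensions l Gs. unique_Tl_partition T l G (\<lambda>i. verts (Gs i))})
         \<ge> (1 - (real l * real l * 2 ^ n * 2 ^ n * rho ^ (((aN n - R) div r) * ((aN n - R) div r))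
         + real l * real n * (real l * real (aN n) + 1) * rho ^ gN l r R n)) * real (card (extensions l Gs))"
        unfolding rho_def by (rule main_inst[OF hT h1 h2 h3 c(2) big r1 ram F2 F1 c(4) gbig])
      have "(1 - \<eta>) * real (card (extensions l Gs))
         \<le> (1 - (real l * real l * 2 ^ n * 2 ^ n * rho ^ (((aN n - R) div r) * ((aN n - R) div r))
         + real l * real n * (real l * real (aN n) + 1) * rho ^ gN l r R n)) * real (card (extensions l Gs))"
        using c(5) by (intro mult_right_mono) auto
      then show "real (card {G \<in> extensions l Gs. unique_Tl_partition T l G (\<lambda>i. verts (Gs i))})
       \<ge> (1 - \<eta>) * real (card (extensions l Gs))" using M by linarith
    qed
  qed
qed


end
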